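(* Let $X$ be an infinite discrete space and $G$ a subgroup of $\mathrm S(X)$ with the permutation topology $\tau_\partial$, and suppose the action of $G$ on $X$ is ultratransitive. Then: (1) the maximal equiuniformity $\mathcal U_X$ is totally bounded; (2) the completion of $X$ with respect to $\mathcal U_X$ is the one-point Alexandroff compactification $\alpha X$; (3) $L\wedge R=\mathcal U$; (4) $G$ is Roelcke precompact; (5) the Roelcke compactification of $G$ is the enveloping Ellis semigroup, i.e. the closure of $\jmath(G)$ in $(\alpha X)^{\alpha X}$, and coincides with the Roelcke compactification of $(\mathrm S(X),\tau_\partial)$.
   Context: The action is ultratransitive if for every $n$ and any two $n$-tuples of distinct points $x_1,\dots,x_n$ and $y_1,\dots,y_n$ there is $g\in G$ with $g(x_k)=y_k$. $\tau_\partial$: identity neighbourhood base the pointwise stabilizers $\mathrm{St}_{x_1,\dots,x_n}$. $\mathcal U_X$: uniformity on $X$ with base the partitions $\{\mathrm{St}_{x_1,\dots,x_n}x\mid x\in X\}$. $\mathcal U$: the uniformity on $G$ with base the coverings $\{\{h\in G\mid (g(x_k),h(x_k))\in\mathrm U,\ k=1,\dots,n\}\mid g\in G\}$, $x_1,\dots,x_n\in X$, $\mathrm U$ an entourage of $\mathcal U_X$. $L\wedge R$: the Roelcke uniformity (greatest lower bound of left and right uniformities); Roelcke precompact means it is totally bounded; the Roelcke compactification is the completion with respect to it. $\jmath(g)=(g(x))_{x\in\alpha X}$, where $g$ is extended to $\alpha X$ fixing the point at infinity. *)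

theory Defs
  imports "HOL-Analysis.Analysis"
begin

definition perms :: "('a \<Rightarrow> 'a) set" where
  "perms = {f. bij f}"

definition is_perm_group :: "('a \<Rightarrow> 'a) set \<Rightarrow> bool" where
  "is_perm_group G \<longleftrightarrow> G \<subseteq> perms \<and> id \<in> G \<and> (\<forall>f\<in>G. \<forall>g\<in>G. f \<circ> g \<in> G) \<and> (\<forall>f\<in>G. inv f \<in> G)"

definition ultratransitive :: "('a \<Rightarrow> 'a) set \<Rightarrow> bool" where
  "ultratransitive G \<longleftrightarrow>
     (\<forall>xs ys. distinct xs \<and> distinct ys \<and> length xs = length ys \<longrightarrow> (\<exists>g\<in>G. map g xs = ys))"

definition stab :: "('a \<Rightarrow> 'a) set \<Rightarrow> 'a set \<Rightarrow> ('a \<Rightarrow> 'a) set" where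
  "stab G A = {g \<in> G. \<forall>x\<in>A. g x = x}"

definition is_uniformity :: "'b set \<Rightarrow> ('b \<times> 'b) filter \<Rightarrow> bool" where
  "is_uniformity S U \<longleftrightarrow> eventually (\<lambda>p. p \<in> S \<times> S) U \<and>
     (\<forall>E. eventually (\<lambda>p. p \<in> E) U \<longrightarrow>
        (\<forall>x\<in>S. (x, x) \<in> E) \<and> eventually (\<lambda>(x, y). (y, x) \<in> E) U \<and>
        (\<exists>D. eventually (\<lambda>p. p \<in> D) U \<and> D O D \<subseteq> E))"

definition totally_bounded_unif :: "'b set \<Rightarrow> ('b \<times> 'b) filter \<Rightarrow> bool" where
  "totally_bounded_unif S U \<longleftrightarrow>
     (\<forall>E. eventually (\<lambda>p. p \<in> E) U \<longrightarrow>
        (\<exists>K. finite K \<and> K \<subseteq> S \<and> S \<subseteq> (\<Union>k\<in>K. {y. (k, y) \<in> E})))"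

definition unif_cauchy :: "'b set \<Rightarrow> ('b \<times> 'b) filter \<Rightarrow> 'b filter \<Rightarrow> bool" where
  "unif_cauchy S U F \<longleftrightarrow> F \<noteq> bot \<and> F \<le> principal S \<and>
     (\<forall>E. eventually (\<lambda>p. p \<in> E) U \<longrightarrow> eventually (\<lambda>p. p \<in> E) (F \<times>\<^sub>F F))"

definition unif_converges :: "('b \<times> 'b) filter \<Rightarrow> 'b filter \<Rightarrow> 'b \<Rightarrow> bool" where
  "unif_converges U F x \<longleftrightarrow> (\<forall>E. eventually (\<lambda>p. p \<in> E) U \<longrightarrow> eventually (\<lambda>y. (x, y) \<in> E) F)"

definition unif_complete :: "'b set \<Rightarrow> ('b \<times> 'b) filter \<Rightarrow> bool" where
  "unif_complete S U \<longleftrightarrow> (\<forall>F. unif_cauchy S U F \<longrightarrow> (\<exists>x\<in>S. unif_converges U F x))"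

definition unif_separated :: "'b set \<Rightarrow> ('b \<times> 'b) filter \<Rightarrow> bool" where
  "unif_separated S U \<longleftrightarrow>
     (\<forall>x\<in>S. \<forall>y\<in>S. (\<forall>E. eventually (\<lambda>p. p \<in> E) U \<longrightarrow> (x, y) \<in> E) \<longrightarrow> x = y)"

definition unif_dense :: "'b set \<Rightarrow> ('b \<times> 'b) filter \<Rightarrow> 'b set \<Rightarrow> bool" where
  "unif_dense S U D \<longleftrightarrow> D \<subseteq> S \<and>
     (\<forall>x\<in>S. \<forall>E. eventually (\<lambda>p. p \<in> E) U \<longrightarrow> (\<exists>d\<in>D. (x, d) \<in> E))"

definition unif_induces :: "('b \<times> 'b) filter \<Rightarrow> 'b topology \<Rightarrow> bool" where
  "unif_induces U T \<longleftrightarrow>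
     (\<forall>V. openin T V \<longleftrightarrow> V \<subseteq> topspace T \<and>
        (\<forall>x\<in>V. \<exists>E. eventually (\<lambda>p. p \<in> E) U \<and> {y. (x, y) \<in> E} \<subseteq> V))"

definition is_completion ::
  "'b set \<Rightarrow> ('b \<times> 'b) filter \<Rightarrow> 'c set \<Rightarrow> ('c \<times> 'c) filter \<Rightarrow> ('b \<Rightarrow> 'c) \<Rightarrow> bool" where
  "is_completion S U T V e \<longleftrightarrow>
     is_uniformity S U \<and> is_uniformity T V \<and> unif_separated T V \<and> unif_complete T V \<and>
     e ` S \<subseteq> T \<and> inj_on e S \<and>
     U = inf (filtercomap (map_prod e e) V) (principal (S \<times> S)) \<and>
     unif_dense T V (e ` S)"

text \<open>the uniformity of neighbourhoods of the diagonal (the unique uniformity of a compact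
  Hausdorff space)\<close>
definition topo_unif :: "'b topology \<Rightarrow> ('b \<times> 'b) filter" where
  "topo_unif T = (INF W\<in>{W. openin (prod_topology T T) W \<and> (\<forall>x\<in>topspace T. (x, x) \<in> W)}. principal W)"

definition UX :: "('a \<Rightarrow> 'a) set \<Rightarrow> ('a \<times> 'a) filter" where
  "UX G = (INF A\<in>{A. finite A}. principal {(x, y). \<exists>g\<in>stab G A. g x = y})"

definition left_unif :: "('a \<Rightarrow> 'a) set \<Rightarrow> (('a \<Rightarrow> 'a) \<times> ('a \<Rightarrow> 'a)) filter" where
  "left_unif G = (INF A\<in>{A. finite A}.
      principal {(g, h). g \<in> G \<and> h \<in> G \<and> inv g \<circ> h \<in> stab G A})"

definition right_unif :: "('a \<Rightarrow> 'a) set \<Rightarrow> (('a \<Rightarrow> 'a) \<times> ('a \<Rightarrow> 'a)) filter" where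
  "right_unif G = (INF A\<in>{A. finite A}.
      principal {(g, h). g \<in> G \<and> h \<in> G \<and> h \<circ> inv g \<in> stab G A})"

text \<open>L /\ R: the greatest lower bound (in the lattice of uniformities on G) of L and R,
  i.e. the finest uniformity coarser than both\<close>
definition roelcke_unif :: "('a \<Rightarrow> 'a) set \<Rightarrow> (('a \<Rightarrow> 'a) \<times> ('a \<Rightarrow> 'a)) filter" where
  "roelcke_unif G = Inf {U. is_uniformity G U \<and> left_unif G \<le> U \<and> right_unif G \<le> U}"

text \<open>the uniformity \<U> on G, given by its base of uniform coverings\<close>
definition UU :: "('a \<Rightarrow> 'a) set \<Rightarrow> (('a \<Rightarrow> 'a) \<times> ('a \<Rightarrow> 'a)) filter" where
  "UU G = (INF ae\<in>{(A, E). finite A \<and> eventually (\<lambda>p. p \<in> E) (UX G)}.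
      principal (\<Union>g\<in>G. {h\<in>G. \<forall>x\<in>fst ae. (g x, h x) \<in> snd ae} \<times>
                         {h\<in>G. \<forall>x\<in>fst ae. (g x, h x) \<in> snd ae}))"

section \<open>Alexandroff compactification alpha X = 'a option (None = point at infinity)\<close>

definition alphaX :: "'a option topology" where
  "alphaX = topology (\<lambda>U. None \<in> U \<longrightarrow> finite (- U))"

definition jmap :: "('a \<Rightarrow> 'a) \<Rightarrow> ('a option \<Rightarrow> 'a option)" where
  "jmap g = map_option g"

end

theory Submission
  imports Defs
begin

definition UA :: "'a set \<Rightarrow> 'a option set" where
  "UA A = {u. \<forall>a\<in>A. u \<noteq> Some a}"
definition DA :: "'a set \<Rightarrow> ('a option \<times> 'a option) set" where
  "DA A = {(u,v). u = v \<or> (u \<in> UA A \<and> v \<in> UA A)}"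

lemma istop_alpha: "istopology (\<lambda>U. None \<in> U \<longrightarrow> finite (- (U::'a option set)))"
proof -
  have 1: "\<forall>S T. (None \<in> S \<longrightarrow> finite (- (S::'a option set))) \<longrightarrow> (None \<in> T \<longrightarrow> finite (- T))
     \<longrightarrow> (None \<in> S \<inter> T \<longrightarrow> finite (- (S \<inter> T)))" by auto
  have 2: "\<forall>K. (\<forall>S\<in>K. None \<in> S \<longrightarrow> finite (- (S::'a option set))) \<longrightarrow> (None \<in> \<Union>K \<longrightarrow> finite (- \<Union>K))"
  proof (intro allI impI)
    fix K :: "'a option set set"
    assume H: "\<forall>S\<in>K. None \<in> S \<longrightarrow> finite (- S)" and "None \<in> \<Union>K"
    then obtain S where "S \<in> K" "None \<in> S" by auto
    with H have "finite (-S)" by auto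
    moreover have "- \<Union>K \<subseteq> -S" using \<open>S\<in>K\<close> by auto
    ultimately show "finite (- \<Union> K)" using finite_subset by blast
  qed
  show ?thesis unfolding istopology_def using 1 2 by blast
qed

lemma openin_alpha: "openin alphaX U \<longleftrightarrow> (None \<in> U \<longrightarrow> finite (- U))"
proof -
  have "openin alphaX = (\<lambda>U. None \<in> U \<longrightarrow> finite (- (U::'a option set)))"
    unfolding alphaX_def by (rule topology_inverse'[OF istop_alpha])
  then show ?thesis by simp
qed

lemma topspace_alpha[simp]: "topspace alphaX = UNIV"
proof -
  have "openin alphaX UNIV" by (simp add: openin_alpha)
  then show ?thesis by (meson openin_subset top.extremum_uniqueI)
qed

lemma finite_Some_vimage: "finite A \<Longrightarrow> finite (Some -` A)"
  by (simp add: finite_vimageI)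

lemma finite_UA_compl: "finite A \<Longrightarrow> finite (- UA A)"
proof -
  assume "finite A"
  have "- UA A = Some ` A" unfolding UA_def by auto
  then show ?thesis using \<open>finite A\<close> by simp
qed

lemma openin_UA: "finite A \<Longrightarrow> openin alphaX (UA A)"
  using finite_UA_compl openin_alpha by blast

lemma openin_single_Some: "openin alphaX {Some a}"
  unfolding openin_alpha by auto

lemma compact_alpha: "compact_space alphaX"
  unfolding compact_space_alt topspace_alpha
proof (intro allI impI)
  fix \<U> :: "'a option set set"
  assume H: "(\<forall>U\<in>\<U>. openin alphaX U) \<and> UNIV \<subseteq> \<Union> \<U>"
  then obtain U0 where U0: "U0 \<in> \<U>" "None \<in> U0" by blast
  with H have fin: "finite (- U0)" by (auto simp: openin_alpha)
  have "\<forall>x\<in>-U0. \<exists>U\<in>\<U>. x \<in> U" using H by blast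
  then obtain f where f: "\<forall>x\<in>-U0. f x \<in> \<U> \<and> x \<in> f x" by metis
  show "\<exists>\<F>. finite \<F> \<and> \<F> \<subseteq> \<U> \<and> UNIV \<subseteq> \<Union> \<F>"
  proof (intro exI conjI)
    show "finite (insert U0 (f ` (-U0)))" using fin by simp
    show "insert U0 (f ` (-U0)) \<subseteq> \<U>" using f U0 by auto
    show "UNIV \<subseteq> \<Union> (insert U0 (f ` (-U0)))" using f by blast
  qed
qed

lemma DA_refl[simp]: "(u,u) \<in> DA A" by (simp add: DA_def)
lemma DA_sym: "(u,v) \<in> DA A \<Longrightarrow> (v,u) \<in> DA A" by (auto simp: DA_def)
lemma DA_trans: "(u,v) \<in> DA A \<Longrightarrow> (v,w) \<in> DA A \<Longrightarrow> (u,w) \<in> DA A" by (auto simp: DA_def)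
lemma DA_mono: "A \<subseteq> B \<Longrightarrow> DA B \<subseteq> DA A" by (auto simp: DA_def UA_def)
lemma DA_Some: "(Some x, Some y) \<in> DA A \<longleftrightarrow> x = y \<or> (x \<notin> A \<and> y \<notin> A)"
  by (auto simp: DA_def UA_def)
lemma DA_None: "(None, v) \<in> DA A \<longleftrightarrow> v \<in> UA A"
  by (auto simp: DA_def UA_def)

abbreviation PP :: "('a option \<Rightarrow> 'a option) topology" where
  "PP \<equiv> product_topology (\<lambda>_. alphaX) UNIV"

definition Nb :: "('a option \<Rightarrow> 'a option) \<Rightarrow> 'a option set \<Rightarrow> 'a set \<Rightarrow> ('a option \<Rightarrow> 'a option) set" where
  "Nb c F A = {p. \<forall>x\<in>F. (c x, p x) \<in> DA A}"

lemma topspace_PP[simp]: "topspace PP = UNIV"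
  by (simp add: PiE_UNIV_domain)

lemma Nb_box: "Nb c F A = PiE UNIV (\<lambda>i. if i \<in> F then (if c i \<in> Some ` A then {c i} else UA A) else UNIV)"
  unfolding Nb_def PiE_UNIV_domain by (auto simp: DA_def UA_def Pi_def)

lemma openin_Nb:
  assumes "finite F" "finite A"
  shows "openin PP (Nb c F A)"
proof -
  have op: "openin alphaX (if i \<in> F then if c i \<in> Some ` A then {c i} else UA A else UNIV)" for i
  proof (cases "i \<in> F")
    case False
    then show ?thesis by (metis openin_topspace topspace_alpha)
  next
    case True
    show ?thesis
    proof (cases "c i \<in> Some ` A")
      case True
      then obtain a where "c i = Some a" by blast
      then show ?thesis using True \<open>i \<in> F\<close> openin_single_Some by simp
    next
      case False
      then show ?thesis using \<open>i \<in> F\<close> openin_UA[OF assms(2)] by simp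
    qed
  qed
  have fin: "finite {i \<in> UNIV. (if i \<in> F then if c i \<in> Some ` A then {c i} else UA A else UNIV) \<noteq> topspace alphaX}"
    by (rule finite_subset[OF _ assms(1)]) auto
  show ?thesis unfolding Nb_box openin_PiE_gen
    by (rule disjI2, rule conjI[OF fin], rule ballI, rule op)
qed

lemma c_in_Nb[simp]: "c \<in> Nb c F A" by (simp add: Nb_def)

lemma Nb_sub:
  assumes "openin PP Ob" "c \<in> Ob"
  shows "\<exists>F A. finite F \<and> finite A \<and> Nb c F A \<subseteq> Ob"
proof -
  obtain U where U: "finite {i \<in> UNIV. U i \<noteq> topspace alphaX}" "\<forall>i\<in>UNIV. openin alphaX (U i)"
    "c \<in> PiE UNIV U" "PiE UNIV U \<subseteq> Ob"
  proof -
    have "\<forall>x\<in>Ob. \<exists>U. finite {i \<in> UNIV. U i \<noteq> topspace alphaX} \<and>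
                 (\<forall>i \<in> UNIV. openin alphaX (U i)) \<and> x \<in> Pi\<^sub>E UNIV U \<and> Pi\<^sub>E UNIV U \<subseteq> Ob"
      using assms(1) by (simp only: openin_product_topology_alt)
    then have "\<exists>U. finite {i \<in> UNIV. U i \<noteq> topspace alphaX} \<and>
                 (\<forall>i \<in> UNIV. openin alphaX (U i)) \<and> c \<in> Pi\<^sub>E UNIV U \<and> Pi\<^sub>E UNIV U \<subseteq> Ob"
      using assms(2) by (rule bspec)
    then show ?thesis using that by blast
  qed
  define F where "F = {i. U i \<noteq> UNIV}"
  define Af where "Af i = (if c i = None then Some -` (- U i) else {the (c i)})" for i
  define A where "A = (\<Union>i\<in>F. Af i)"
  have fF: "finite F" using U(1) by (simp add: F_def)
  have fAf: "finite (Af i)" for i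
  proof (cases "c i = None")
    case True
    then have "None \<in> U i" using U(3) by (metis PiE_mem UNIV_I)
    then have "finite (- U i)" using U(2) by (auto simp: openin_alpha)
    then show ?thesis using True by (simp add: Af_def finite_vimageI)
  qed (auto simp: Af_def)
  have fA: "finite A" unfolding A_def using fF fAf by simp
  have "Nb c F A \<subseteq> PiE UNIV U"
  proof
    fix p assume p: "p \<in> Nb c F A"
    have "p i \<in> U i" for i
    proof (cases "i \<in> F")
      case False then have "U i = UNIV" by (simp add: F_def)
      then show ?thesis by simp
    next
      case True
      then have d: "(c i, p i) \<in> DA A" using p by (auto simp: Nb_def)
      have ci: "c i \<in> U i" using U(3) by (metis PiE_mem UNIV_I)
      have sub: "Af i \<subseteq> A" using True by (auto simp: A_def)
      show ?thesis
      proof (cases "c i")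
        case None
        then have "p i \<in> UA A" using d by (simp add: DA_None)
        show ?thesis
        proof (cases "p i")
          case None
          then show ?thesis using ci \<open>c i = None\<close> by simp
        next
          case (Some b)
          then have "b \<notin> A" using \<open>p i \<in> UA A\<close> by (auto simp: UA_def)
          then have "b \<notin> Af i" using sub by blast
          then have "Some b \<in> U i" using \<open>c i = None\<close> by (simp add: Af_def)
          then show ?thesis using Some by simp
        qed
      next
        case (Some a)
        then have "a \<in> A" using sub by (auto simp: Af_def)
        then have "p i = c i" using d Some by (auto simp: DA_def UA_def)
        then show ?thesis using ci by simp
      qed
    qed
    then show "p \<in> PiE UNIV U" by (simp add: PiE_UNIV_domain Pi_iff)
  qed
  then have "Nb c F A \<subseteq> Ob" using U(4) by (rule order_trans)
  then show ?thesis using fF fA by blast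
qed

lemma in_closure_PP:
  fixes c :: "'a option \<Rightarrow> 'a option"
  shows "c \<in> PP closure_of S \<longleftrightarrow> (\<forall>(F::'a option set) (A::'a set). finite F \<longrightarrow> finite A \<longrightarrow> (\<exists>y\<in>S. y \<in> Nb c F A))"
proof
  assume "c \<in> PP closure_of S"
  then have H0: "\<forall>T. c \<in> T \<and> openin PP T \<longrightarrow> (\<exists>y. y \<in> S \<and> y \<in> T)"
    unfolding in_closure_of by (rule conjunct2)
  show "\<forall>F A. finite F \<longrightarrow> finite A \<longrightarrow> (\<exists>y\<in>S. y \<in> Nb c F A)"
  proof (intro allI impI)
    fix F :: "'a option set" and A :: "'a set" assume "finite F" "finite A"
    then have "openin PP (Nb c F A)" by (rule openin_Nb)
    then have "\<exists>y. y \<in> S \<and> y \<in> Nb c F A" using H0 c_in_Nb by simp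
    then show "\<exists>y\<in>S. y \<in> Nb c F A" by (simp only: Bex_def)
  qed
next
  assume H: "\<forall>(F::'a option set) (A::'a set). finite F \<longrightarrow> finite A \<longrightarrow> (\<exists>y\<in>S. y \<in> Nb c F A)"
  have "\<forall>T. c \<in> T \<and> openin PP T \<longrightarrow> (\<exists>y. y \<in> S \<and> y \<in> T)"
  proof (intro allI impI)
    fix T assume "c \<in> T \<and> openin PP T"
    then have T: "openin PP T" "c \<in> T" by auto
    from Nb_sub[OF T] obtain F A where FA: "finite F" "finite A" "Nb c F A \<subseteq> T" by blast
    then obtain y where "y \<in> S" "y \<in> Nb c F A" using H by meson
    then show "\<exists>y. y \<in> S \<and> y \<in> T" using FA(3) by auto
  qed
  then show "c \<in> PP closure_of S" by (simp add: in_closure_of)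
qed

lemma compact_PP: "compact_space PP"
  by (simp add: compact_space_product_topology compact_alpha)

lemma ut_extend:
  assumes "ultratransitive G" "finite P" "inj_on \<phi> P"
  shows "\<exists>g\<in>G. \<forall>x\<in>P. g x = \<phi> x"
proof -
  obtain xs where xs: "set xs = P" "distinct xs" using finite_distinct_list[OF assms(2)] by blast
  have "distinct (map \<phi> xs)" using xs assms(3) by (simp add: distinct_map)
  moreover have "length xs = length (map \<phi> xs)" by simp
  ultimately obtain g where "g \<in> G" "map g xs = map \<phi> xs"
    using assms(1) xs(2) unfolding ultratransitive_def by blast
  then show ?thesis using xs by (metis map_eq_conv)
qed

lemma perms_group: "is_perm_group perms"
  unfolding is_perm_group_def perms_def by (auto intro: bij_comp bij_imp_bij_inv)

lemma swap_lemma: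
  fixes xs ys :: "'a list"
  shows "distinct xs \<Longrightarrow> distinct ys \<Longrightarrow> length xs = length ys \<Longrightarrow> \<exists>g. bij g \<and> map g xs = ys"
proof (induction xs arbitrary: ys)
  case Nil then have "ys = []" by simp
  then show ?case using bij_id by auto
next
  case (Cons x xs)
  then obtain y ys' where ys: "ys = y # ys'" by (cases ys) auto
  with Cons obtain g' where g': "bij g'" "map g' xs = ys'" by auto
  define z where "z = g' x"
  define t where "t = (\<lambda>w. if w = y then z else if w = z then y else w)"
  have tt: "t \<circ> t = id" by (auto simp: t_def fun_eq_iff)
  have bt: "bij t" by (rule o_bij[OF tt tt])
  have zn: "z \<notin> set ys'"
  proof
    assume "z \<in> set ys'"
    then obtain x' where "x' \<in> set xs" "g' x' = g' x" using g'(2) z_def by auto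
    then have "x' = x" using g'(1) by (metis bij_pointE)
    then show False using Cons.prems(1) \<open>x' \<in> set xs\<close> by simp
  qed
  have yn: "y \<notin> set ys'" using Cons.prems(2) ys by simp
  have "map (t \<circ> g') xs = ys'"
  proof -
    have "\<forall>w\<in>set ys'. t w = w" using zn yn by (auto simp: t_def)
    then have "map t ys' = ys'" by (simp add: map_idI)
    then show ?thesis using g'(2) by (metis map_map)
  qed
  moreover have "(t \<circ> g') x = y" by (simp add: t_def z_def)
  moreover have "bij (t \<circ> g')" using bt g'(1) by (rule bij_comp[rotated])
  ultimately have "bij (t \<circ> g') \<and> map (t \<circ> g') (x # xs) = ys" using ys by simp
  then show ?case by blast
qed

lemma perms_ut: "ultratransitive perms"
  unfolding ultratransitive_def perms_def using swap_lemma by fastforce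

lemma ev_INF_pr:
  assumes "B \<noteq> {}" "\<And>a b. a\<in>B \<Longrightarrow> b\<in>B \<Longrightarrow> \<exists>c\<in>B. S c \<subseteq> S a \<inter> S b"
  shows "eventually P (INF b\<in>B. principal (S b)) \<longleftrightarrow> (\<exists>b\<in>B. \<forall>x\<in>S b. P x)"
proof -
  have "eventually P (INF b\<in>B. principal (S b)) \<longleftrightarrow> (\<exists>b\<in>B. eventually P (principal (S b)))"
  proof (rule eventually_INF_base)
    show "B \<noteq> {}" by (rule assms(1))
    fix a b assume "a \<in> B" "b \<in> B"
    then obtain c where "c \<in> B" "S c \<subseteq> S a \<inter> S b" using assms(2) by blast
    then show "\<exists>x\<in>B. principal (S x) \<le> inf (principal (S a)) (principal (S b))"
      by (auto simp: inf_principal)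
  qed
  then show ?thesis by (simp add: eventually_principal)
qed

lemma ev_topo:
  "eventually P (topo_unif T) \<longleftrightarrow>
    (\<exists>W. openin (prod_topology T T) W \<and> (\<forall>x\<in>topspace T. (x,x)\<in>W) \<and> (\<forall>p\<in>W. P p))"
proof -
  have "eventually P (topo_unif T) \<longleftrightarrow>
    (\<exists>W\<in>{W. openin (prod_topology T T) W \<and> (\<forall>x\<in>topspace T. (x, x) \<in> W)}. \<forall>p\<in>W. P p)"
    unfolding topo_unif_def
  proof (rule ev_INF_pr)
    have "openin (prod_topology T T) (topspace T \<times> topspace T)"
      by (metis openin_topspace topspace_prod_topology)
    then show "{W. openin (prod_topology T T) W \<and> (\<forall>x\<in>topspace T. (x, x) \<in> W)} \<noteq> {}" by blast
  next
    fix a b assume "a \<in> {W. openin (prod_topology T T) W \<and> (\<forall>x\<in>topspace T. (x, x) \<in> W)}"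
      "b \<in> {W. openin (prod_topology T T) W \<and> (\<forall>x\<in>topspace T. (x, x) \<in> W)}"
    then show "\<exists>c\<in>{W. openin (prod_topology T T) W \<and> (\<forall>x\<in>topspace T. (x, x) \<in> W)}. c \<subseteq> a \<inter> b"
      by (intro bexI[of _ "a \<inter> b"]) auto
  qed
  then show ?thesis by simp
qed

definition DX :: "'a set \<Rightarrow> ('a \<times> 'a) set" where
  "DX A = {(x,y). x = y \<or> (x \<notin> A \<and> y \<notin> A)}"

lemma DX_refl[simp]: "(x,x) \<in> DX A" by (simp add: DX_def)

lemma orbit_eq:
  assumes "is_perm_group G" "ultratransitive G" "finite A"
  shows "{(x,y). \<exists>g\<in>stab G A. g x = y} = DX A"
proof
  show "{(x,y). \<exists>g\<in>stab G A. g x = y} \<subseteq> DX A"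
  proof clarify
    fix x g assume g: "g \<in> stab G A"
    then have "g \<in> G" "\<forall>a\<in>A. g a = a" by (auto simp: stab_def)
    then have "inj g" using assms(1) by (auto simp: is_perm_group_def perms_def bij_def)
    show "(x, g x) \<in> DX A"
    proof (cases "x \<in> A")
      case True then show ?thesis using \<open>\<forall>a\<in>A. g a = a\<close> by simp
    next
      case False
      have "g x \<notin> A"
      proof
        assume "g x \<in> A"
        then have "g (g x) = g x" using \<open>\<forall>a\<in>A. g a = a\<close> by simp
        then have "g x = x" using \<open>inj g\<close> by (simp add: inj_eq)
        then show False using False \<open>g x \<in> A\<close> by simp
      qed
      then show ?thesis using False by (simp add: DX_def)
    qed
  qed
next
  show "DX A \<subseteq> {(x,y). \<exists>g\<in>stab G A. g x = y}"
  proof clarify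
    fix x y assume "(x,y) \<in> DX A"
    show "\<exists>g\<in>stab G A. g x = y"
    proof (cases "x = y")
      case True
      have "id \<in> G" using assms(1) by (simp add: is_perm_group_def)
      then show ?thesis using True by (intro bexI[of _ id]) (auto simp: stab_def)
    next
      case False
      then have xy: "x \<notin> A" "y \<notin> A" using \<open>(x,y) \<in> DX A\<close> by (auto simp: DX_def)
      have "inj_on (id(x:=y)) (insert x A)" using xy by (auto simp: inj_on_def)
      then obtain g where "g \<in> G" "\<forall>z\<in>insert x A. g z = (id(x:=y)) z"
        using ut_extend[OF assms(2)] assms(3) by (metis finite_insert)
      then show ?thesis using xy by (intro bexI[of _ g]) (auto simp: stab_def)
    qed
  qed
qed

lemma UX_eq:
  assumes "is_perm_group G" "ultratransitive G"
  shows "UX G = (INF A\<in>{A. finite A}. principal (DX A))"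
  unfolding UX_def using orbit_eq[OF assms] by (intro INF_cong) auto

lemma ev_UX:
  assumes "is_perm_group G" "ultratransitive G"
  shows "eventually P (UX G) \<longleftrightarrow> (\<exists>A. finite A \<and> (\<forall>p\<in>DX A. P p))"
proof -
  have "eventually P (INF A\<in>{A. finite A}. principal (DX A)) \<longleftrightarrow> (\<exists>A\<in>{A. finite A}. \<forall>p\<in>DX A. P p)"
  proof (rule ev_INF_pr)
    fix a b :: "'a set" assume "a \<in> {A. finite A}" "b \<in> {A. finite A}"
    then show "\<exists>c\<in>{A. finite A}. DX c \<subseteq> DX a \<inter> DX b"
      by (intro bexI[of _ "a \<union> b"]) (auto simp: DX_def)
  qed auto
  then show ?thesis unfolding UX_eq[OF assms] by simp
qed

lemma openin_DA: "finite A \<Longrightarrow> openin (prod_topology alphaX alphaX) (DA A)"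
  unfolding openin_prod_topology_alt
proof (intro allI impI)
  fix u v assume "finite A" "(u, v) \<in> DA A"
  show "\<exists>U V. openin alphaX U \<and> openin alphaX V \<and> u \<in> U \<and> v \<in> V \<and> U \<times> V \<subseteq> DA A"
  proof (cases "u \<in> UA A \<and> v \<in> UA A")
    case True
    then show ?thesis using openin_UA[OF \<open>finite A\<close>]
      by (intro exI[of _ "UA A"]) (auto simp: DA_def)
  next
    case False
    then have "u = v" using \<open>(u, v) \<in> DA A\<close> by (auto simp: DA_def)
    from False have "u \<notin> UA A \<or> v \<notin> UA A" by blast
    then obtain a where "u = Some a" using \<open>u = v\<close> by (auto simp: UA_def)
    then show ?thesis using \<open>u = v\<close> openin_single_Some[of a]
      by (intro exI[of _ "{u}"]) auto
  qed
qed

lemma ev_alpha: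
  "eventually P (topo_unif alphaX) \<longleftrightarrow> (\<exists>A. finite A \<and> (\<forall>p\<in>DA A. P p))"
  unfolding ev_topo
proof
  assume "\<exists>W. openin (prod_topology alphaX alphaX) W \<and> (\<forall>x\<in>topspace alphaX. (x, x) \<in> W) \<and> (\<forall>p\<in>W. P p)"
  then obtain W where W: "openin (prod_topology alphaX alphaX) W" "\<forall>x. (x, x) \<in> W" "\<forall>p\<in>W. P p"
    by auto
  have "(None, None) \<in> W" using W(2) by simp
  then obtain U V where UV: "openin alphaX U" "openin alphaX V" "None \<in> U" "None \<in> V" "U \<times> V \<subseteq> W"
    using W(1) unfolding openin_prod_topology_alt by meson
  define A where "A = Some -` (- U) \<union> Some -` (- V)"
  have "finite (-U)" "finite (-V)" using UV by (auto simp: openin_alpha)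
  then have fA: "finite A" by (simp add: A_def finite_vimageI)
  have "DA A \<subseteq> W"
  proof clarify
    fix u v assume "(u,v) \<in> DA A"
    show "(u,v) \<in> W"
    proof (cases "u = v")
      case True then show ?thesis using W(2) by simp
    next
      case False
      then have "u \<in> UA A" "v \<in> UA A" using \<open>(u,v) \<in> DA A\<close> by (auto simp: DA_def)
      then have "u \<in> U" "v \<in> V" using UV(3,4) by (cases u; cases v; auto simp: UA_def A_def)+
      then show ?thesis using UV(5) by auto
    qed
  qed
  then show "\<exists>A. finite A \<and> (\<forall>p\<in>DA A. P p)" using fA W(3) by blast
next
  assume "\<exists>A. finite A \<and> (\<forall>p\<in>DA A. P p)"
  then obtain A where "finite A" "\<forall>p\<in>DA A. P p" by blast
  then show "\<exists>W. openin (prod_topology alphaX alphaX) W \<and> (\<forall>x\<in>topspace alphaX. (x, x) \<in> W) \<and> (\<forall>p\<in>W. P p)"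
    using openin_DA by (intro exI[of _ "DA A"]) auto
qed

lemma ev_UX_sub:
  assumes "is_perm_group G" "ultratransitive G"
  shows "eventually (\<lambda>p. p \<in> E) (UX G) \<longleftrightarrow> (\<exists>A. finite A \<and> DX A \<subseteq> E)"
  unfolding ev_UX[OF assms] subset_eq ..

lemma ev_alpha_sub:
  "eventually (\<lambda>p. p \<in> E) (topo_unif alphaX) \<longleftrightarrow> (\<exists>A. finite A \<and> DA A \<subseteq> E)"
  unfolding ev_alpha subset_eq ..

lemma part1:
  assumes "infinite (UNIV :: 'a set)" "is_perm_group (G :: ('a \<Rightarrow> 'a) set)" "ultratransitive G"
  shows "totally_bounded_unif UNIV (UX G)"
  unfolding totally_bounded_unif_def
proof (intro allI impI)
  fix E assume "eventually (\<lambda>p. p \<in> E) (UX G)"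
  then obtain A where A: "finite A" "DX A \<subseteq> E" using ev_UX_sub[OF assms(2,3), of E] by auto
  obtain z where z: "z \<notin> A" using ex_new_if_finite[OF assms(1) A(1)] by blast
  have cov: "y \<in> (\<Union>k\<in>insert z A. {y. (k, y) \<in> E})" for y
  proof (cases "y \<in> A")
    case True
    have "(y,y) \<in> E" using A(2) DX_refl[of y A] by (rule subsetD)
    moreover have "y \<in> insert z A" using True by simp
    ultimately show ?thesis by (intro UN_I[of y]) simp_all
  next
    case False
    have "(z,y) \<in> DX A" using z False by (simp add: DX_def)
    then have "(z,y) \<in> E" using A(2) by (rule subsetD[rotated])
    then show ?thesis by (intro UN_I[of z]) simp_all
  qed
  have "finite (insert z A)" using A(1) by simp
  then show "\<exists>K. finite K \<and> K \<subseteq> UNIV \<and> UNIV \<subseteq> (\<Union>k\<in>K. {y. (k, y) \<in> E})"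
    using cov by blast
qed

lemma unif_UX:
  assumes "is_perm_group (G :: ('a \<Rightarrow> 'a) set)" "ultratransitive G"
  shows "is_uniformity UNIV (UX G)"
  unfolding is_uniformity_def
proof (intro conjI allI impI ballI)
  show "eventually (\<lambda>p. p \<in> UNIV \<times> UNIV) (UX G)" by (rule always_eventually) simp
  fix E assume "eventually (\<lambda>p. p \<in> E) (UX G)"
  then obtain A where A: "finite A" "DX A \<subseteq> E" using ev_UX_sub[OF assms, of E] by auto
  fix x :: 'a
  show "(x,x) \<in> E" by (rule subsetD[OF A(2) DX_refl])
next
  fix E assume "eventually (\<lambda>p. p \<in> E) (UX G)"
  then obtain A where A: "finite A" "DX A \<subseteq> E" using ev_UX_sub[OF assms, of E] by auto
  have "\<forall>p\<in>DX A. (case p of (x, y) \<Rightarrow> (y, x) \<in> E)" using A(2) by (auto simp: DX_def)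
  then show "eventually (\<lambda>(x, y). (y, x) \<in> E) (UX G)" unfolding ev_UX[OF assms] using A(1) by blast
  have "DX A O DX A \<subseteq> E" using A(2) by (auto simp: DX_def)
  moreover have "eventually (\<lambda>p. p \<in> DX A) (UX G)" unfolding ev_UX_sub[OF assms] using A(1) by blast
  ultimately show "\<exists>D. eventually (\<lambda>p. p \<in> D) (UX G) \<and> D O D \<subseteq> E" by blast
qed

lemma unif_alpha: "is_uniformity UNIV (topo_unif alphaX :: ('a option \<times> 'a option) filter)"
  unfolding is_uniformity_def
proof (intro conjI allI impI ballI)
  show "eventually (\<lambda>p. p \<in> UNIV \<times> UNIV) (topo_unif alphaX :: ('a option \<times> 'a option) filter)" by (rule always_eventually) simp
  fix E :: "('a option \<times> 'a option) set" assume "eventually (\<lambda>p. p \<in> E) (topo_unif alphaX)"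
  then obtain A where A: "finite A" "DA A \<subseteq> E" using ev_alpha_sub[of E] by auto
  fix x :: "'a option"
  show "(x,x) \<in> E" by (rule subsetD[OF A(2) DA_refl])
next
  fix E :: "('a option \<times> 'a option) set" assume "eventually (\<lambda>p. p \<in> E) (topo_unif alphaX)"
  then obtain A where A: "finite A" "DA A \<subseteq> E" using ev_alpha_sub[of E] by auto
  have "\<forall>p\<in>DA A. (case p of (x, y) \<Rightarrow> (y, x) \<in> E)" using A(2) DA_sym by auto
  then show "eventually (\<lambda>(x, y). (y, x) \<in> E) (topo_unif alphaX)" unfolding ev_alpha using A(1) by blast
  have "DA A O DA A \<subseteq> E" using A(2) DA_trans by blast
  moreover have "eventually (\<lambda>p. p \<in> DA A) (topo_unif alphaX)" unfolding ev_alpha_sub using A(1) by blast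
  ultimately show "\<exists>D. eventually (\<lambda>p. p \<in> D) (topo_unif alphaX) \<and> D O D \<subseteq> E" by blast
qed

lemma sep_alpha: "unif_separated UNIV (topo_unif alphaX :: ('a option \<times> 'a option) filter)"
  unfolding unif_separated_def
proof (intro ballI impI)
  fix u v :: "'a option"
  assume H: "\<forall>E. eventually (\<lambda>p. p \<in> E) (topo_unif alphaX) \<longrightarrow> (u, v) \<in> E"
  define A where "A = Some -` {u, v}"
  have "finite A" unfolding A_def by (simp add: finite_vimageI)
  then have "eventually (\<lambda>p. p \<in> DA A) (topo_unif alphaX)" unfolding ev_alpha_sub by blast
  then have "(u,v) \<in> DA A" using H by blast
  then show "u = v" by (cases u; cases v) (auto simp: DA_def UA_def A_def)
qed

lemma complete_alpha: "unif_complete UNIV (topo_unif alphaX :: ('a option \<times> 'a option) filter)"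
  unfolding unif_complete_def
proof (intro allI impI)
  fix F :: "'a option filter"
  assume C: "unif_cauchy UNIV (topo_unif alphaX) F"
  then have Fnb: "F \<noteq> bot" by (simp add: unif_cauchy_def)
  show "\<exists>x\<in>UNIV. unif_converges (topo_unif alphaX) F x"
  proof (cases "\<exists>a. eventually (\<lambda>u. u = Some a) F")
    case True
    then obtain a where a: "eventually (\<lambda>u. u = Some a) F" by blast
    have "unif_converges (topo_unif alphaX) F (Some a)"
      unfolding unif_converges_def
    proof (intro allI impI)
      fix E :: "('a option \<times> 'a option) set" assume "eventually (\<lambda>p. p \<in> E) (topo_unif alphaX)"
      then obtain A where A: "finite A" "DA A \<subseteq> E" using ev_alpha_sub[of E] by auto
      show "eventually (\<lambda>y. (Some a, y) \<in> E) F"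
        using a by (rule eventually_mono) (simp add: subsetD[OF A(2) DA_refl])
    qed
    then show ?thesis by blast
  next
    case False
    have "unif_converges (topo_unif alphaX) F None"
      unfolding unif_converges_def
    proof (intro allI impI)
      fix E :: "('a option \<times> 'a option) set" assume "eventually (\<lambda>p. p \<in> E) (topo_unif alphaX)"
      then obtain A where A: "finite A" "DA A \<subseteq> E" using ev_alpha_sub[of E] by auto
      then have "eventually (\<lambda>p. p \<in> DA A) (topo_unif alphaX)" unfolding ev_alpha_sub by blast
      then have "eventually (\<lambda>p. p \<in> DA A) (F \<times>\<^sub>F F)" using C by (simp add: unif_cauchy_def)
      then obtain Q where Q: "eventually Q F" "\<And>x y. Q x \<Longrightarrow> Q y \<Longrightarrow> (x, y) \<in> DA A"
        unfolding eventually_prod_same by blast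
      have "Q u \<Longrightarrow> u \<in> UA A" for u
      proof (rule ccontr)
        assume "Q u" "u \<notin> UA A"
        then obtain a where a: "u = Some a" "a \<in> A" by (auto simp: UA_def)
        have "eventually (\<lambda>v. v = Some a) F"
          using Q(1)
        proof (rule eventually_mono)
          fix v assume "Q v"
          then have "(u, v) \<in> DA A" using Q(2) \<open>Q u\<close> by blast
          then show "v = Some a" using a by (auto simp: DA_def UA_def)
        qed
        then show False using False by blast
      qed
      then show "eventually (\<lambda>y. (None, y) \<in> E) F"
        using Q(1) A(2) by (auto elim!: eventually_mono simp: DA_None[symmetric])
    qed
    then show ?thesis by blast
  qed
qed

lemma induces_alpha: "unif_induces (topo_unif alphaX) (alphaX :: 'a option topology)"
  unfolding unif_induces_def
proof (intro allI iffI conjI ballI)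
  fix V :: "'a option set" and x assume V: "openin alphaX V" "x \<in> V"
  show "\<exists>E. eventually (\<lambda>p. p \<in> E) (topo_unif alphaX) \<and> {y. (x, y) \<in> E} \<subseteq> V"
  proof (cases x)
    case None
    then have fin: "finite (- V)" using V by (simp add: openin_alpha)
    define A where "A = Some -` (- V)"
    have "finite A" using fin by (simp add: A_def finite_vimageI)
    then have "eventually (\<lambda>p. p \<in> DA A) (topo_unif alphaX)" unfolding ev_alpha_sub by blast
    moreover have "{y. (x, y) \<in> DA A} \<subseteq> V"
    proof
      fix y assume "y \<in> {y. (x, y) \<in> DA A}"
      then have "y \<in> UA A" using None by (simp add: DA_None)
      then show "y \<in> V" using V(2) None by (cases y) (auto simp: UA_def A_def)
    qed
    ultimately show ?thesis by blast
  next
    case (Some a)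
    have "eventually (\<lambda>p. p \<in> DA {a}) (topo_unif alphaX)" unfolding ev_alpha_sub by blast
    moreover have "{y. (x, y) \<in> DA {a}} \<subseteq> V" using V(2) Some by (auto simp: DA_def UA_def)
    ultimately show ?thesis by blast
  qed
next
  fix V :: "'a option set" assume "openin alphaX V"
  then show "V \<subseteq> topspace alphaX" by simp
next
  fix V :: "'a option set"
  assume H: "V \<subseteq> topspace alphaX \<and>
         (\<forall>x\<in>V. \<exists>E. eventually (\<lambda>p. p \<in> E) (topo_unif alphaX) \<and> {y. (x, y) \<in> E} \<subseteq> V)"
  show "openin alphaX V"
    unfolding openin_alpha
  proof
    assume "None \<in> V"
    then obtain E where E: "eventually (\<lambda>p. p \<in> E) (topo_unif alphaX)" "{y. (None, y) \<in> E} \<subseteq> V"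
      using H by blast
    then obtain A where A: "finite A" "DA A \<subseteq> E" using ev_alpha_sub[of E] by auto
    have "UA A \<subseteq> V" using A(2) E(2) by (auto simp: DA_None[symmetric])
    then have "- V \<subseteq> - UA A" by blast
    then show "finite (- V)" using finite_UA_compl[OF A(1)] finite_subset by blast
  qed
qed

lemma DA_Some_DX: "(Some x, Some y) \<in> DA A \<longleftrightarrow> (x, y) \<in> DX A"
  by (simp add: DA_Some DX_def)

lemma comap_alpha:
  assumes "is_perm_group (G :: ('a \<Rightarrow> 'a) set)" "ultratransitive G"
  shows "UX G = inf (filtercomap (map_prod Some Some) (topo_unif alphaX)) (principal (UNIV \<times> UNIV))"
  unfolding filter_eq_iff
proof (intro allI)
  fix P :: "'a \<times> 'a \<Rightarrow> bool"
  have R: "eventually P (inf (filtercomap (map_prod Some Some) (topo_unif alphaX)) (principal (UNIV \<times> UNIV)))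
     \<longleftrightarrow> (\<exists>Q. eventually Q (topo_unif alphaX) \<and> (\<forall>x. Q (map_prod Some Some x) \<longrightarrow> P x))"
    by (simp add: eventually_inf_principal eventually_filtercomap)
  show "eventually P (UX G) \<longleftrightarrow>
     eventually P (inf (filtercomap (map_prod Some Some) (topo_unif alphaX)) (principal (UNIV \<times> UNIV)))"
    unfolding R ev_UX[OF assms]
  proof
    assume "\<exists>A. finite A \<and> (\<forall>p\<in>DX A. P p)"
    then obtain A where A: "finite A" "\<forall>p\<in>DX A. P p" by blast
    have "eventually (\<lambda>p. p \<in> DA A) (topo_unif alphaX)" unfolding ev_alpha_sub using A(1) by blast
    moreover have "\<forall>x. map_prod Some Some x \<in> DA A \<longrightarrow> P x"
    proof (intro allI impI)
      fix x :: "'a \<times> 'a" assume "map_prod Some Some x \<in> DA A"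
      then have "x \<in> DX A" by (cases x) (simp add: DA_Some_DX)
      then show "P x" using A(2) by blast
    qed
    ultimately show "\<exists>Q. eventually Q (topo_unif alphaX) \<and> (\<forall>x. Q (map_prod Some Some x) \<longrightarrow> P x)"
      by blast
  next
    assume "\<exists>Q. eventually Q (topo_unif alphaX) \<and> (\<forall>x. Q (map_prod Some Some x) \<longrightarrow> P x)"
    then obtain Q where Q: "eventually Q (topo_unif alphaX)" "\<forall>x. Q (map_prod Some Some x) \<longrightarrow> P x"
      by blast
    from Q(1) obtain A where A: "finite A" "\<forall>p\<in>DA A. Q p" unfolding ev_alpha by blast
    have "\<forall>p\<in>DX A. P p"
    proof
      fix p :: "'a \<times> 'a" assume "p \<in> DX A"
      then have "map_prod Some Some p \<in> DA A" by (cases p) (simp add: DA_Some_DX)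
      then show "P p" using A(2) Q(2) by blast
    qed
    then show "\<exists>A. finite A \<and> (\<forall>p\<in>DX A. P p)" using A(1) by blast
  qed
qed

lemma dense_alpha:
  assumes "infinite (UNIV :: 'a set)"
  shows "unif_dense UNIV (topo_unif alphaX) (Some ` (UNIV :: 'a set))"
  unfolding unif_dense_def
proof (intro conjI ballI allI impI)
  fix x :: "'a option" and E :: "('a option \<times> 'a option) set"
  assume "eventually (\<lambda>p. p \<in> E) (topo_unif alphaX)"
  then obtain A where A: "finite A" "DA A \<subseteq> E" using ev_alpha_sub[of E] by auto
  show "\<exists>d\<in>range Some. (x, d) \<in> E"
  proof (cases x)
    case (Some a)
    have "(x,x) \<in> E" by (rule subsetD[OF A(2) DA_refl])
    then show ?thesis using Some by blast
  next
    case None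
    obtain z where z: "z \<notin> A" using ex_new_if_finite[OF assms A(1)] by blast
    have "(None, Some z) \<in> DA A" using z by (auto simp: DA_None UA_def)
    then have "(x, Some z) \<in> E" using None A(2) by (simp add: subsetD)
    then show ?thesis by blast
  qed
qed simp

lemma part2:
  assumes "infinite (UNIV :: 'a set)" "is_perm_group (G :: ('a \<Rightarrow> 'a) set)" "ultratransitive G"
  shows "is_completion UNIV (UX G) UNIV (topo_unif alphaX) Some \<and> unif_induces (topo_unif alphaX) (alphaX :: 'a option topology)"
  unfolding is_completion_def
  using unif_UX[OF assms(2,3)] unif_alpha sep_alpha complete_alpha comap_alpha[OF assms(2,3)]
    dense_alpha[OF assms(1)] induces_alpha
  by simp

definition RC :: "('a \<Rightarrow> 'a) set \<Rightarrow> 'a set \<Rightarrow> (('a \<Rightarrow> 'a) \<times> ('a \<Rightarrow> 'a)) set" where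
  "RC G C = {(g,h). g \<in> G \<and> h \<in> G \<and> (\<forall>x\<in>C. (g x \<in> C \<or> h x \<in> C) \<longrightarrow> g x = h x)}"

definition RRf :: "('a \<Rightarrow> 'a) set \<Rightarrow> (('a \<Rightarrow> 'a) \<times> ('a \<Rightarrow> 'a)) filter" where
  "RRf G = (INF C\<in>{C. finite C}. principal (RC G C))"

definition LA :: "('a \<Rightarrow> 'a) set \<Rightarrow> 'a set \<Rightarrow> (('a \<Rightarrow> 'a) \<times> ('a \<Rightarrow> 'a)) set" where
  "LA G A = {(g, h). g \<in> G \<and> h \<in> G \<and> inv g \<circ> h \<in> stab G A}"

definition RA :: "('a \<Rightarrow> 'a) set \<Rightarrow> 'a set \<Rightarrow> (('a \<Rightarrow> 'a) \<times> ('a \<Rightarrow> 'a)) set" where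
  "RA G A = {(g, h). g \<in> G \<and> h \<in> G \<and> h \<circ> inv g \<in> stab G A}"

lemma RC_mono: "A \<subseteq> B \<Longrightarrow> RC G B \<subseteq> RC G A"
  unfolding RC_def by blast

lemma stab_mono: "A \<subseteq> B \<Longrightarrow> stab G B \<subseteq> stab G A"
  unfolding stab_def by blast

lemma LA_mono: "A \<subseteq> B \<Longrightarrow> LA G B \<subseteq> LA G A"
  unfolding LA_def using stab_mono by blast

lemma RA_mono: "A \<subseteq> B \<Longrightarrow> RA G B \<subseteq> RA G A"
  unfolding RA_def using stab_mono by blast

lemma ev_RR: "eventually P (RRf G) \<longleftrightarrow> (\<exists>C. finite C \<and> (\<forall>p\<in>RC G C. P p))"
proof -
  have "eventually P (INF C\<in>{C. finite C}. principal (RC G C)) \<longleftrightarrow> (\<exists>C\<in>{C. finite C}. \<forall>p\<in>RC G C. P p)"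
  proof (rule ev_INF_pr)
    fix a b :: "'a set" assume "a \<in> {A. finite A}" "b \<in> {A. finite A}"
    then show "\<exists>c\<in>{A. finite A}. RC G c \<subseteq> RC G a \<inter> RC G b"
      using RC_mono[of a "a \<union> b" G] RC_mono[of b "a \<union> b" G] by (intro bexI[of _ "a \<union> b"]) auto
  qed auto
  then show ?thesis unfolding RRf_def by simp
qed

lemma ev_RR_sub: "eventually (\<lambda>p. p \<in> E) (RRf G) \<longleftrightarrow> (\<exists>C. finite C \<and> RC G C \<subseteq> E)"
  unfolding ev_RR subset_eq ..

lemma ev_left: "eventually P (left_unif G) \<longleftrightarrow> (\<exists>A. finite A \<and> (\<forall>p\<in>LA G A. P p))"
proof -
  have "eventually P (INF A\<in>{A. finite A}. principal (LA G A)) \<longleftrightarrow> (\<exists>A\<in>{A. finite A}. \<forall>p\<in>LA G A. P p)"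
  proof (rule ev_INF_pr)
    fix a b :: "'a set" assume "a \<in> {A. finite A}" "b \<in> {A. finite A}"
    then show "\<exists>c\<in>{A. finite A}. LA G c \<subseteq> LA G a \<inter> LA G b"
      using LA_mono[of a "a \<union> b" G] LA_mono[of b "a \<union> b" G] by (intro bexI[of _ "a \<union> b"]) auto
  qed auto
  moreover have "left_unif G = (INF A\<in>{A. finite A}. principal (LA G A))"
    unfolding left_unif_def LA_def ..
  ultimately show ?thesis by simp
qed

lemma ev_right: "eventually P (right_unif G) \<longleftrightarrow> (\<exists>A. finite A \<and> (\<forall>p\<in>RA G A. P p))"
proof -
  have "eventually P (INF A\<in>{A. finite A}. principal (RA G A)) \<longleftrightarrow> (\<exists>A\<in>{A. finite A}. \<forall>p\<in>RA G A. P p)"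
  proof (rule ev_INF_pr)
    fix a b :: "'a set" assume "a \<in> {A. finite A}" "b \<in> {A. finite A}"
    then show "\<exists>c\<in>{A. finite A}. RA G c \<subseteq> RA G a \<inter> RA G b"
      using RA_mono[of a "a \<union> b" G] RA_mono[of b "a \<union> b" G] by (intro bexI[of _ "a \<union> b"]) auto
  qed auto
  moreover have "right_unif G = (INF A\<in>{A. finite A}. principal (RA G A))"
    unfolding right_unif_def RA_def ..
  ultimately show ?thesis by simp
qed

lemma pg_bij: "is_perm_group G \<Longrightarrow> g \<in> G \<Longrightarrow> bij g"
  by (auto simp: is_perm_group_def perms_def)

lemma pg_comp: "is_perm_group G \<Longrightarrow> f \<in> G \<Longrightarrow> g \<in> G \<Longrightarrow> f \<circ> g \<in> G"
  by (auto simp: is_perm_group_def)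

lemma pg_inv: "is_perm_group G \<Longrightarrow> f \<in> G \<Longrightarrow> inv f \<in> G"
  by (auto simp: is_perm_group_def)

lemma LA_sub:
  assumes "is_perm_group G"
  shows "LA G C \<subseteq> RC G C"
proof clarify
  fix g h assume "(g,h) \<in> LA G C"
  then have gh: "g \<in> G" "h \<in> G" "\<forall>x\<in>C. inv g (h x) = x" by (auto simp: LA_def stab_def)
  have "bij g" using assms gh(1) by (rule pg_bij)
  have "h x = g x" if "x \<in> C" for x
  proof -
    have "g (inv g (h x)) = h x" using \<open>bij g\<close> by (simp add: bij_is_surj surj_f_inv_f)
    then show ?thesis using gh(3) that by simp
  qed
  then show "(g,h) \<in> RC G C" using gh by (auto simp: RC_def)
qed

lemma RA_sub:
  assumes "is_perm_group G"
  shows "RA G C \<subseteq> RC G C"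
proof clarify
  fix g h assume "(g,h) \<in> RA G C"
  then have gh: "g \<in> G" "h \<in> G" "\<forall>c\<in>C. h (inv g c) = c" by (auto simp: RA_def stab_def)
  have bg: "bij g" using assms gh(1) by (rule pg_bij)
  have bh: "bij h" using assms gh(2) by (rule pg_bij)
  have "g x = h x" if "x \<in> C" "g x \<in> C \<or> h x \<in> C" for x
  proof (cases "g x \<in> C")
    case True
    then have "h (inv g (g x)) = g x" using gh(3) by blast
    moreover have "inv g (g x) = x" using bg by (simp add: bij_is_inj inv_f_f)
    ultimately show ?thesis by simp
  next
    case False
    then have "h x \<in> C" using that by blast
    then have "h (inv g (h x)) = h x" using gh(3) by blast
    then have "inv g (h x) = x" using bh by (simp add: bij_is_inj inj_eq)
    moreover have "g (inv g (h x)) = h x" using bg by (simp add: bij_is_surj surj_f_inv_f)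
    ultimately show ?thesis by simp
  qed
  then show "(g,h) \<in> RC G C" using gh by (auto simp: RC_def)
qed

lemma RC_sub_LR:
  assumes "is_perm_group G" "ultratransitive G" "finite C"
  shows "RC G C \<subseteq> LA G C O RA G C"
proof clarify
  fix h1 h2 assume "(h1,h2) \<in> RC G C"
  then have H: "h1 \<in> G" "h2 \<in> G" "\<forall>x\<in>C. (h1 x \<in> C \<or> h2 x \<in> C) \<longrightarrow> h1 x = h2 x"
    unfolding RC_def by blast+
  have b1: "bij h1" by (rule pg_bij[OF assms(1) H(1)])
  have b2: "bij h2" by (rule pg_bij[OF assms(1) H(2)])
  define P where "P = C \<union> inv h2 ` C"
  define \<phi> where "\<phi> x = (if x \<in> C then h1 x else h2 x)" for x
  have fP: "finite P" using assms(3) by (simp add: P_def)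
  have h2i: "h2 (inv h2 c) = c" for c using b2 by (simp add: bij_is_surj surj_f_inv_f)
  have i1: "inj h1" "inj h2" using b1 b2 by (simp_all add: bij_is_inj)
  have inj: "inj_on \<phi> P"
  proof (rule inj_onI)
    fix x y assume xy: "x \<in> P" "y \<in> P" "\<phi> x = \<phi> y"
    show "x = y"
    proof (cases "x \<in> C"; cases "y \<in> C")
      assume "x \<in> C" "y \<in> C"
      then show ?thesis using xy(3) i1(1) by (simp add: \<phi>_def inj_eq)
    next
      assume "x \<notin> C" "y \<notin> C"
      then show ?thesis using xy(3) i1(2) by (simp add: \<phi>_def inj_eq)
    next
      assume a: "x \<in> C" "y \<notin> C"
      then obtain c where c: "c \<in> C" "y = inv h2 c" using xy(2) by (auto simp: P_def)
      have "h1 x = h2 y" using xy(3) a by (simp add: \<phi>_def)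
      also have "\<dots> = c" using c h2i by simp
      finally have "h1 x = c" .
      then have "h1 x = h2 x" using H(3) a(1) c(1) by blast
      then have "h2 x = h2 y" using \<open>h1 x = h2 y\<close> by simp
      then show ?thesis using i1(2) by (simp add: inj_eq)
    next
      assume a: "x \<notin> C" "y \<in> C"
      then obtain c where c: "c \<in> C" "x = inv h2 c" using xy(1) by (auto simp: P_def)
      have "h1 y = h2 x" using xy(3) a by (simp add: \<phi>_def)
      also have "\<dots> = c" using c h2i by simp
      finally have "h1 y = c" .
      then have "h1 y = h2 y" using H(3) a(2) c(1) by blast
      then have "h2 x = h2 y" using \<open>h1 y = h2 x\<close> by simp
      then show ?thesis using i1(2) by (simp add: inj_eq)
    qed
  qed
  obtain y where y: "y \<in> G" "\<forall>x\<in>P. y x = \<phi> x" using ut_extend[OF assms(2) fP inj] by blast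
  have bijy: "bij y" using assms(1) y(1) by (rule pg_bij)
  have y1: "y x = h1 x" if "x \<in> C" for x using y(2) that by (simp add: P_def \<phi>_def)
  have y2: "y (inv h2 c) = c" if "c \<in> C" for c
  proof (cases "inv h2 c \<in> C")
    case True
    then have "y (inv h2 c) = h1 (inv h2 c)" by (rule y1)
    also have "\<dots> = h2 (inv h2 c)" using H(3) True that h2i by metis
    finally show ?thesis using h2i by simp
  next
    case False
    then show ?thesis using y(2) that h2i by (simp add: P_def \<phi>_def)
  qed
  have L: "(h1, y) \<in> LA G C"
  proof -
    have "inv h1 \<circ> y \<in> G" using assms(1) H(1) y(1) by (simp add: pg_comp pg_inv)
    moreover have "(inv h1 \<circ> y) x = x" if "x \<in> C" for x
      using y1[OF that] i1(1) by (simp add: inv_f_f)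
    ultimately show ?thesis using H(1) y(1) by (simp add: LA_def stab_def)
  qed
  have R: "(y, h2) \<in> RA G C"
  proof -
    have "h2 \<circ> inv y \<in> G" using assms(1) H(2) y(1) by (simp add: pg_comp pg_inv)
    moreover have "(h2 \<circ> inv y) c = c" if "c \<in> C" for c
    proof -
      have "inv y c = inv h2 c" using y2[OF that] by (metis bijy bij_is_inj inv_f_f)
      then show ?thesis using h2i by simp
    qed
    ultimately show ?thesis using H(2) y(1) by (simp add: RA_def stab_def)
  qed
  show "(h1, h2) \<in> LA G C O RA G C" using L R by (rule relcompI)
qed

lemma RC_refl: "g \<in> G \<Longrightarrow> (g,g) \<in> RC G C"
  unfolding RC_def by blast

lemma RC_sym: assumes "(g,h) \<in> RC G C" shows "(h,g) \<in> RC G C"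
proof -
  have A: "g \<in> G" "h \<in> G" "\<forall>x\<in>C. (g x \<in> C \<or> h x \<in> C) \<longrightarrow> g x = h x"
    using assms unfolding RC_def by blast+
  have "\<forall>x\<in>C. (h x \<in> C \<or> g x \<in> C) \<longrightarrow> h x = g x"
  proof (intro ballI impI)
    fix x assume "x \<in> C" "h x \<in> C \<or> g x \<in> C"
    then have "g x = h x" using A(3) by blast
    then show "h x = g x" by (rule sym)
  qed
  then show ?thesis using A(1,2) unfolding RC_def by blast
qed

lemma RC_trans:
  assumes "(f,g) \<in> RC G C" "(g,h) \<in> RC G C" shows "(f,h) \<in> RC G C"
proof -
  have A: "f \<in> G" "g \<in> G" "\<forall>x\<in>C. (f x \<in> C \<or> g x \<in> C) \<longrightarrow> f x = g x"
    using assms(1) unfolding RC_def by blast+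
  have B: "h \<in> G" "\<forall>x\<in>C. (g x \<in> C \<or> h x \<in> C) \<longrightarrow> g x = h x"
    using assms(2) unfolding RC_def by blast+
  have "f x = h x" if "x \<in> C" "f x \<in> C \<or> h x \<in> C" for x
  proof (cases "f x \<in> C")
    case True
    then have "f x = g x" using A(3) that(1) by blast
    then have "g x \<in> C" using True by simp
    then have "g x = h x" using B(2) that(1) by blast
    then show ?thesis using \<open>f x = g x\<close> by simp
  next
    case False
    then have "h x \<in> C" using that(2) by blast
    then have "g x = h x" using B(2) that(1) by blast
    then have "g x \<in> C" using \<open>h x \<in> C\<close> by simp
    then have "f x = g x" using A(3) that(1) by blast
    then show ?thesis using \<open>g x = h x\<close> by simp
  qed
  then show ?thesis using A(1) B(1) unfolding RC_def by blast
qed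

lemma unif_RR: "is_uniformity G (RRf G)"
  unfolding is_uniformity_def
proof (intro conjI allI impI ballI)
  have "RC G {} \<subseteq> G \<times> G" unfolding RC_def by blast
  then show "eventually (\<lambda>p. p \<in> G \<times> G) (RRf G)" unfolding ev_RR_sub by blast
next
  fix E x assume "eventually (\<lambda>p. p \<in> E) (RRf G)" "x \<in> G"
  then obtain C where C: "finite C" "RC G C \<subseteq> E" unfolding ev_RR_sub by blast
  show "(x,x) \<in> E" using C(2) RC_refl[OF \<open>x \<in> G\<close>] by (rule subsetD)
next
  fix E assume "eventually (\<lambda>p. p \<in> E) (RRf G)"
  then obtain C where C: "finite C" "RC G C \<subseteq> E" unfolding ev_RR_sub by blast
  have "\<forall>p\<in>RC G C. (case p of (x, y) \<Rightarrow> (y, x) \<in> E)"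
  proof
    fix p assume "p \<in> RC G C"
    then obtain a b where ab: "p = (a,b)" "(a,b) \<in> RC G C" by (cases p) auto
    then have "(b,a) \<in> RC G C" by (simp add: RC_sym)
    then have "(b,a) \<in> E" using C(2) by (rule subsetD[rotated])
    then show "case p of (x, y) \<Rightarrow> (y, x) \<in> E" using ab(1) by simp
  qed
  then show "eventually (\<lambda>(x, y). (y, x) \<in> E) (RRf G)" unfolding ev_RR using C(1) by blast
  have "RC G C O RC G C \<subseteq> E"
  proof clarify
    fix a b c assume "(a,b) \<in> RC G C" "(b,c) \<in> RC G C"
    then have "(a,c) \<in> RC G C" by (rule RC_trans)
    then show "(a,c) \<in> E" using C(2) by (rule subsetD[rotated])
  qed
  moreover have "eventually (\<lambda>p. p \<in> RC G C) (RRf G)" unfolding ev_RR_sub using C(1) by blast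
  ultimately show "\<exists>D. eventually (\<lambda>p. p \<in> D) (RRf G) \<and> D O D \<subseteq> E" by blast
qed

lemma left_le_RR: assumes "is_perm_group G" shows "left_unif G \<le> RRf G"
  unfolding le_filter_def
proof (intro allI impI)
  fix P assume "eventually P (RRf G)"
  then obtain C where C: "finite C" "\<forall>p\<in>RC G C. P p" unfolding ev_RR by blast
  have "\<forall>p\<in>LA G C. P p"
  proof
    fix p assume "p \<in> LA G C"
    then have "p \<in> RC G C" using LA_sub[OF assms] by (rule subsetD[rotated])
    then show "P p" using C(2) by blast
  qed
  then show "eventually P (left_unif G)" unfolding ev_left using C(1) by blast
qed

lemma right_le_RR: assumes "is_perm_group G" shows "right_unif G \<le> RRf G"
  unfolding le_filter_def
proof (intro allI impI)
  fix P assume "eventually P (RRf G)"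
  then obtain C where C: "finite C" "\<forall>p\<in>RC G C. P p" unfolding ev_RR by blast
  have "\<forall>p\<in>RA G C. P p"
  proof
    fix p assume "p \<in> RA G C"
    then have "p \<in> RC G C" using RA_sub[OF assms] by (rule subsetD[rotated])
    then show "P p" using C(2) by blast
  qed
  then show "eventually P (right_unif G)" unfolding ev_right using C(1) by blast
qed

lemma roelcke_eq:
  assumes "is_perm_group G" "ultratransitive G"
  shows "roelcke_unif G = RRf G"
proof (rule antisym)
  show "roelcke_unif G \<le> RRf G"
    unfolding roelcke_unif_def
    by (rule Inf_lower) (simp add: unif_RR left_le_RR[OF assms(1)] right_le_RR[OF assms(1)])
next
  show "RRf G \<le> roelcke_unif G"
    unfolding roelcke_unif_def
  proof (rule Inf_greatest)
    fix U assume "U \<in> {U. is_uniformity G U \<and> left_unif G \<le> U \<and> right_unif G \<le> U}"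
    then have U: "is_uniformity G U" "left_unif G \<le> U" "right_unif G \<le> U" by auto
    show "RRf G \<le> U"
      unfolding le_filter_def
    proof (intro allI impI)
      fix P assume "eventually P U"
      then have "eventually (\<lambda>p. p \<in> {p. P p}) U" by simp
      then obtain D where D: "eventually (\<lambda>p. p \<in> D) U" "D O D \<subseteq> {p. P p}"
        using U(1) unfolding is_uniformity_def by blast
      have "eventually (\<lambda>p. p \<in> D) (left_unif G)" using U(2) D(1) by (rule filter_leD)
      then obtain A where A: "finite A" "\<forall>p\<in>LA G A. p \<in> D" unfolding ev_left by blast
      have "eventually (\<lambda>p. p \<in> D) (right_unif G)" using U(3) D(1) by (rule filter_leD)
      then obtain B where B: "finite B" "\<forall>p\<in>RA G B. p \<in> D" unfolding ev_right by blast
      have fC: "finite (A \<union> B)" using A(1) B(1) by simp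
      have "RC G (A \<union> B) \<subseteq> LA G (A \<union> B) O RA G (A \<union> B)"
        by (rule RC_sub_LR[OF assms fC])
      also have "\<dots> \<subseteq> LA G A O RA G B"
        by (rule relcomp_mono) (simp_all add: LA_mono RA_mono)
      also have "\<dots> \<subseteq> D O D" using A(2) B(2) by (intro relcomp_mono) auto
      also have "\<dots> \<subseteq> {p. P p}" by (rule D(2))
      finally have "\<forall>p\<in>RC G (A \<union> B). P p" by blast
      then show "eventually P (RRf G)" unfolding ev_RR using fC by blast
    qed
  qed
qed

definition CC :: "('a \<Rightarrow> 'a) set \<Rightarrow> 'a set \<Rightarrow> ('a \<times> 'a) set \<Rightarrow> ('a \<Rightarrow> 'a) \<Rightarrow> ('a \<Rightarrow> 'a) set" where
  "CC G A E g = {h\<in>G. \<forall>x\<in>A. (g x, h x) \<in> E}"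

definition WW :: "('a \<Rightarrow> 'a) set \<Rightarrow> 'a set \<Rightarrow> ('a \<times> 'a) set \<Rightarrow> (('a \<Rightarrow> 'a) \<times> ('a \<Rightarrow> 'a)) set" where
  "WW G A E = (\<Union>g\<in>G. CC G A E g \<times> CC G A E g)"

lemma UU_alt: "UU G = (INF ae\<in>{(A, E). finite A \<and> eventually (\<lambda>p. p \<in> E) (UX G)}. principal (WW G (fst ae) (snd ae)))"
  unfolding UU_def WW_def CC_def ..

lemma WW_mono: "A \<subseteq> A' \<Longrightarrow> E' \<subseteq> E \<Longrightarrow> WW G A' E' \<subseteq> WW G A E"
  unfolding WW_def CC_def by blast

lemma ev_UU:
  fixes G :: "('a \<Rightarrow> 'a) set"
  shows "eventually P (UU G) \<longleftrightarrow> (\<exists>A E. finite A \<and> eventually (\<lambda>p. p \<in> E) (UX G) \<and> (\<forall>p\<in>WW G A E. P p))"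
proof -
  have "eventually P (UU G) \<longleftrightarrow> (\<exists>ae\<in>{(A, E). finite (A::'a set) \<and> eventually (\<lambda>p. p \<in> E) (UX G)}. \<forall>p\<in>WW G (fst ae) (snd ae). P p)"
    unfolding UU_alt
  proof (rule ev_INF_pr)
    have "({}, UNIV) \<in> {(A, E). finite (A::'a set) \<and> eventually (\<lambda>p. p \<in> E) (UX G)}" by simp
    then show "{(A, E). finite (A::'a set) \<and> eventually (\<lambda>p. p \<in> E) (UX G)} \<noteq> {}" by blast
  next
    fix a b assume a: "a \<in> {(A, E). finite (A::'a set) \<and> eventually (\<lambda>p. p \<in> E) (UX G)}"
      and b: "b \<in> {(A, E). finite (A::'a set) \<and> eventually (\<lambda>p. p \<in> E) (UX G)}"
    obtain A1 E1 where 1: "a = (A1,E1)" "finite A1" "eventually (\<lambda>p. p \<in> E1) (UX G)" using a by auto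
    obtain A2 E2 where 2: "b = (A2,E2)" "finite A2" "eventually (\<lambda>p. p \<in> E2) (UX G)" using b by auto
    have "eventually (\<lambda>p. p \<in> E1 \<and> p \<in> E2) (UX G)" using 1(3) 2(3) by (rule eventually_conj)
    then have "eventually (\<lambda>p. p \<in> E1 \<inter> E2) (UX G)" by simp
    then have "(A1 \<union> A2, E1 \<inter> E2) \<in> {(A, E). finite (A::'a set) \<and> eventually (\<lambda>p. p \<in> E) (UX G)}"
      using 1(2) 2(2) by simp
    moreover have "WW G (A1 \<union> A2) (E1 \<inter> E2) \<subseteq> WW G A1 E1 \<inter> WW G A2 E2"
      using WW_mono[of A1 "A1 \<union> A2" "E1 \<inter> E2" E1 G] WW_mono[of A2 "A1 \<union> A2" "E1 \<inter> E2" E2 G] by blast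
    ultimately show "\<exists>c\<in>{(A, E). finite (A::'a set) \<and> eventually (\<lambda>p. p \<in> E) (UX G)}.
        WW G (fst c) (snd c) \<subseteq> WW G (fst a) (snd a) \<inter> WW G (fst b) (snd b)"
      using 1(1) 2(1) by (intro bexI[of _ "(A1 \<union> A2, E1 \<inter> E2)"]) simp_all
  qed
  then show ?thesis by auto
qed

lemma RC_sub_WW:
  assumes "DX B \<subseteq> E" "A \<union> B \<subseteq> C"
  shows "RC G C \<subseteq> WW G A E"
proof clarify
  fix h1 h2 assume "(h1,h2) \<in> RC G C"
  then have H: "h1 \<in> G" "h2 \<in> G" "\<forall>x\<in>C. (h1 x \<in> C \<or> h2 x \<in> C) \<longrightarrow> h1 x = h2 x"
    unfolding RC_def by blast+
  have "\<forall>x\<in>A. (h1 x, h1 x) \<in> E" using assms(1) by (simp add: subsetD)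
  then have c1: "h1 \<in> CC G A E h1" using H(1) by (simp add: CC_def)
  have "\<forall>x\<in>A. (h1 x, h2 x) \<in> E"
  proof
    fix x assume "x \<in> A"
    then have xC: "x \<in> C" using assms(2) by blast
    have "(h1 x, h2 x) \<in> DX B"
    proof (cases "h1 x \<in> C \<or> h2 x \<in> C")
      case True
      then have "h1 x = h2 x" using H(3) xC by blast
      then show ?thesis by simp
    next
      case False
      then have "h1 x \<notin> B" "h2 x \<notin> B" using assms(2) by blast+
      then show ?thesis by (simp add: DX_def)
    qed
    then show "(h1 x, h2 x) \<in> E" using assms(1) by (rule subsetD[rotated])
  qed
  then have c2: "h2 \<in> CC G A E h1" using H(2) by (simp add: CC_def)
  show "(h1,h2) \<in> WW G A E" unfolding WW_def using c1 c2 H(1) by blast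
qed

lemma WW_sub_RC: "WW G C (DX C) \<subseteq> RC G C"
proof clarify
  fix h1 h2 assume "(h1,h2) \<in> WW G C (DX C)"
  then obtain g where g: "g \<in> G" "h1 \<in> CC G C (DX C) g" "h2 \<in> CC G C (DX C) g"
    unfolding WW_def by blast
  then have H: "h1 \<in> G" "h2 \<in> G" "\<forall>x\<in>C. (g x, h1 x) \<in> DX C" "\<forall>x\<in>C. (g x, h2 x) \<in> DX C"
    unfolding CC_def by blast+
  have "h1 x = h2 x" if "x \<in> C" "h1 x \<in> C \<or> h2 x \<in> C" for x
  proof -
    have d1: "g x = h1 x \<or> (g x \<notin> C \<and> h1 x \<notin> C)" using H(3) that(1) by (simp add: DX_def)
    have d2: "g x = h2 x \<or> (g x \<notin> C \<and> h2 x \<notin> C)" using H(4) that(1) by (simp add: DX_def)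
    show ?thesis using d1 d2 that(2) by metis
  qed
  then show "(h1,h2) \<in> RC G C" using H(1,2) unfolding RC_def by blast
qed

lemma UU_eq:
  assumes "is_perm_group G" "ultratransitive G"
  shows "UU G = RRf G"
  unfolding filter_eq_iff
proof (intro allI iffI)
  fix P assume "eventually P (UU G)"
  then obtain A E where AE: "finite A" "eventually (\<lambda>p. p \<in> E) (UX G)" "\<forall>p\<in>WW G A E. P p"
    unfolding ev_UU by blast
  from AE(2) obtain B where B: "finite B" "DX B \<subseteq> E" unfolding ev_UX_sub[OF assms] by blast
  have "RC G (A \<union> B) \<subseteq> WW G A E" using B(2) by (rule RC_sub_WW) simp
  then have "\<forall>p\<in>RC G (A \<union> B). P p" using AE(3) by blast
  moreover have "finite (A \<union> B)" using AE(1) B(1) by simp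
  ultimately show "eventually P (RRf G)" unfolding ev_RR by blast
next
  fix P assume "eventually P (RRf G)"
  then obtain C where C: "finite C" "\<forall>p\<in>RC G C. P p" unfolding ev_RR by blast
  have "eventually (\<lambda>p. p \<in> DX C) (UX G)" unfolding ev_UX_sub[OF assms] using C(1) by blast
  moreover have "\<forall>p\<in>WW G C (DX C). P p" using WW_sub_RC C(2) by blast
  ultimately show "eventually P (UU G)" unfolding ev_UU using C(1) by blast
qed

definition sig :: "'a set \<Rightarrow> ('a \<Rightarrow> 'a) \<Rightarrow> 'a \<Rightarrow> 'a option" where
  "sig C h = (\<lambda>x\<in>C. if h x \<in> C then Some (h x) else None)"

lemma part4:
  assumes "is_perm_group G" "ultratransitive G"
  shows "totally_bounded_unif G (roelcke_unif G)"
  unfolding totally_bounded_unif_def roelcke_eq[OF assms]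
proof (intro allI impI)
  fix E assume "eventually (\<lambda>p. p \<in> E) (RRf G)"
  then obtain C where C: "finite C" "RC G C \<subseteq> E" unfolding ev_RR_sub by blast
  define rep where "rep s = (SOME h. h \<in> G \<and> sig C h = s)" for s
  define K where "K = rep ` sig C ` G"
  have "sig C ` G \<subseteq> PiE C (\<lambda>_. insert None (Some ` C))"
    by (auto simp: sig_def)
  moreover have "finite (PiE C (\<lambda>_. insert None (Some ` C)))" using C(1) by (simp add: finite_PiE)
  ultimately have "finite (sig C ` G)" by (rule finite_subset)
  then have fK: "finite K" unfolding K_def by simp
  have rep: "rep (sig C h) \<in> G \<and> sig C (rep (sig C h)) = sig C h" if "h \<in> G" for h
    unfolding rep_def by (rule someI[of _ h]) (simp add: that)
  have KG: "K \<subseteq> G" unfolding K_def using rep by blast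
  have cov: "h \<in> (\<Union>k\<in>K. {y. (k, y) \<in> E})" if "h \<in> G" for h
  proof -
    define k where "k = rep (sig C h)"
    have k: "k \<in> G" "sig C k = sig C h" using rep[OF that] by (simp_all add: k_def)
    have "k x = h x" if "x \<in> C" "k x \<in> C \<or> h x \<in> C" for x
    proof -
      have "sig C k x = sig C h x" using k(2) by simp
      then have "(if k x \<in> C then Some (k x) else None) = (if h x \<in> C then Some (h x) else None)"
        using that(1) by (simp add: sig_def)
      then show ?thesis using that(2) by (auto split: if_splits)
    qed
    then have "(k,h) \<in> RC G C" using k(1) \<open>h \<in> G\<close> unfolding RC_def by blast
    then have "(k,h) \<in> E" using C(2) by (rule subsetD[rotated])
    moreover have "k \<in> K" unfolding K_def k_def using that by blast
    ultimately show ?thesis by blast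
  qed
  show "\<exists>K. finite K \<and> K \<subseteq> G \<and> G \<subseteq> (\<Union>k\<in>K. {y. (k, y) \<in> E})"
    using fK KG cov by blast
qed

definition NN :: "('a option \<Rightarrow> 'a option) set \<Rightarrow> 'a option set \<Rightarrow> 'a set \<Rightarrow>
   (('a option \<Rightarrow> 'a option) \<times> ('a option \<Rightarrow> 'a option)) set" where
  "NN K F A = {(p,q). p \<in> K \<and> q \<in> K \<and> (\<forall>x\<in>F. (p x, q x) \<in> DA A)}"

definition VV :: "('a option \<Rightarrow> 'a option) set \<Rightarrow>
   (('a option \<Rightarrow> 'a option) \<times> ('a option \<Rightarrow> 'a option)) filter" where
  "VV K = (INF fa\<in>{(F,A). finite F \<and> finite A}. principal (NN K (fst fa) (snd fa)))"

lemma NN_mono: "F \<subseteq> F' \<Longrightarrow> A \<subseteq> A' \<Longrightarrow> NN K F' A' \<subseteq> NN K F A"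
  unfolding NN_def using DA_mono by blast

lemma ev_VV:
  fixes K :: "('a option \<Rightarrow> 'a option) set"
  shows "eventually P (VV K) \<longleftrightarrow> (\<exists>F A. finite F \<and> finite A \<and> (\<forall>p\<in>NN K F A. P p))"
proof -
  have "eventually P (VV K) \<longleftrightarrow> (\<exists>fa\<in>{(F,A). finite (F::'a option set) \<and> finite (A::'a set)}. \<forall>p\<in>NN K (fst fa) (snd fa). P p)"
    unfolding VV_def
  proof (rule ev_INF_pr)
    have "({}, {}) \<in> {(F,A). finite (F::'a option set) \<and> finite (A::'a set)}" by simp
    then show "{(F,A). finite (F::'a option set) \<and> finite (A::'a set)} \<noteq> {}" by blast
  next
    fix a b assume a: "a \<in> {(F,A). finite (F::'a option set) \<and> finite (A::'a set)}"
      and b: "b \<in> {(F,A). finite (F::'a option set) \<and> finite (A::'a set)}"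
    obtain F1 A1 where 1: "a = (F1,A1)" "finite F1" "finite A1" using a by auto
    obtain F2 A2 where 2: "b = (F2,A2)" "finite F2" "finite A2" using b by auto
    have "NN K (F1 \<union> F2) (A1 \<union> A2) \<subseteq> NN K F1 A1 \<inter> NN K F2 A2"
      using NN_mono[of F1 "F1 \<union> F2" A1 "A1 \<union> A2" K] NN_mono[of F2 "F1 \<union> F2" A2 "A1 \<union> A2" K] by blast
    then show "\<exists>c\<in>{(F,A). finite (F::'a option set) \<and> finite (A::'a set)}.
        NN K (fst c) (snd c) \<subseteq> NN K (fst a) (snd a) \<inter> NN K (fst b) (snd b)"
      using 1 2 by (intro bexI[of _ "(F1 \<union> F2, A1 \<union> A2)"]) simp_all
  qed
  then show ?thesis by auto
qed

lemma ev_VV_sub: "eventually (\<lambda>p. p \<in> E) (VV K) \<longleftrightarrow> (\<exists>F A. finite F \<and> finite A \<and> NN K F A \<subseteq> E)"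
  unfolding ev_VV subset_eq ..

lemma DA_pert:
  assumes "(u,v) \<in> DA A" "A \<subseteq> A'" "\<forall>a. u = Some a \<longrightarrow> a \<in> A'" "\<forall>a. v = Some a \<longrightarrow> a \<in> A'"
    "(u,u') \<in> DA A'" "(v,v') \<in> DA A'"
  shows "(u',v') \<in> DA A"
proof -
  have UA_sub: "UA A' \<subseteq> UA A" using assms(2) by (auto simp: UA_def)
  have nu: "u' = u \<or> (u = None \<and> u' \<in> UA A)"
  proof (cases u)
    case None then show ?thesis using assms(5) UA_sub by (auto simp: DA_def)
  next
    case (Some a) then have "u \<notin> UA A'" using assms(3) by (auto simp: UA_def)
    then show ?thesis using assms(5) by (auto simp: DA_def)
  qed
  have nv: "v' = v \<or> (v = None \<and> v' \<in> UA A)"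
  proof (cases v)
    case None then show ?thesis using assms(6) UA_sub by (auto simp: DA_def)
  next
    case (Some a) then have "v \<notin> UA A'" using assms(4) by (auto simp: UA_def)
    then show ?thesis using assms(6) by (auto simp: DA_def)
  qed
  have NU: "None \<in> UA A" by (simp add: UA_def)
  show ?thesis using nu nv assms(1) NU by (auto simp: DA_def)
qed

lemma DA_sep:
  assumes "u \<noteq> v" "\<forall>a. u = Some a \<longrightarrow> a \<in> A" "\<forall>a. v = Some a \<longrightarrow> a \<in> A"
    "(u,u') \<in> DA A" "(v,v') \<in> DA A"
  shows "(u',v') \<notin> DA A"
proof -
  have nu: "(u' = u \<and> u \<notin> UA A) \<or> (u = None \<and> u' \<in> UA A)"
  proof (cases u)
    case None then show ?thesis using assms(4) by (auto simp: DA_def UA_def)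
  next
    case (Some a) then have "u \<notin> UA A" using assms(2) by (auto simp: UA_def)
    then show ?thesis using assms(4) by (auto simp: DA_def)
  qed
  have nv: "(v' = v \<and> v \<notin> UA A) \<or> (v = None \<and> v' \<in> UA A)"
  proof (cases v)
    case None then show ?thesis using assms(5) by (auto simp: DA_def UA_def)
  next
    case (Some a) then have "v \<notin> UA A" using assms(3) by (auto simp: UA_def)
    then show ?thesis using assms(5) by (auto simp: DA_def)
  qed
  show ?thesis using nu nv assms(1) by (auto simp: DA_def)
qed

lemma topspace_subK[simp]: "topspace (subtopology PP K) = K"
  by simp

lemma openin_NbK: "finite F \<Longrightarrow> finite A \<Longrightarrow> openin (subtopology PP K) (Nb c F A \<inter> K)"
  by (rule openin_subtopology_Int[OF openin_Nb])

lemma openin_NN: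
  assumes "finite F" "finite A"
  shows "openin (prod_topology (subtopology PP K) (subtopology PP K)) (NN K F A)"
  unfolding openin_prod_topology_alt
proof (intro allI impI)
  fix p q assume pq: "(p, q) \<in> NN K F A"
  then have pqK: "p \<in> K" "q \<in> K" and D: "\<forall>x\<in>F. (p x, q x) \<in> DA A" unfolding NN_def by blast+
  define A' where "A' = A \<union> (\<Union>x\<in>F. Some -` {p x, q x})"
  have fA': "finite A'" unfolding A'_def using assms by (simp add: finite_vimageI)
  have AA: "A \<subseteq> A'" by (simp add: A'_def)
  have "(Nb p F A' \<inter> K) \<times> (Nb q F A' \<inter> K) \<subseteq> NN K F A"
  proof clarify
    fix p' q' assume H: "p' \<in> Nb p F A'" "p' \<in> K" "q' \<in> Nb q F A'" "q' \<in> K"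
    have "(p' x, q' x) \<in> DA A" if "x \<in> F" for x
    proof (rule DA_pert[OF _ AA])
      show "(p x, q x) \<in> DA A" using D that by blast
      show "\<forall>a. p x = Some a \<longrightarrow> a \<in> A'"
      proof (intro allI impI)
        fix a assume "p x = Some a"
        then have "a \<in> Some -` {p x, q x}" by simp
        then have "a \<in> (\<Union>x\<in>F. Some -` {p x, q x})" using that by (rule UN_I[rotated])
        then show "a \<in> A'" unfolding A'_def by (rule UnI2)
      qed
      show "\<forall>a. q x = Some a \<longrightarrow> a \<in> A'"
      proof (intro allI impI)
        fix a assume "q x = Some a"
        then have "a \<in> Some -` {p x, q x}" by simp
        then have "a \<in> (\<Union>x\<in>F. Some -` {p x, q x})" using that by (rule UN_I[rotated])
        then show "a \<in> A'" unfolding A'_def by (rule UnI2)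
      qed
      show "(p x, p' x) \<in> DA A'" using H(1) that by (simp add: Nb_def)
      show "(q x, q' x) \<in> DA A'" using H(3) that by (simp add: Nb_def)
    qed
    then show "(p', q') \<in> NN K F A" using H(2,4) unfolding NN_def by blast
  qed
  moreover have "p \<in> Nb p F A' \<inter> K" "q \<in> Nb q F A' \<inter> K" using pqK by simp_all
  ultimately show "\<exists>U V. openin (subtopology PP K) U \<and> openin (subtopology PP K) V \<and> p \<in> U \<and> q \<in> V \<and> U \<times> V \<subseteq> NN K F A"
    using openin_NbK[OF assms(1) fA'] by blast
qed

lemma NN_diag: "p \<in> K \<Longrightarrow> (p,p) \<in> NN K F A"
  unfolding NN_def by simp

lemma compact_K:
  assumes "closedin PP K"
  shows "compact_space (prod_topology (subtopology PP K) (subtopology PP K))"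
proof -
  have "compactin PP K" using compact_PP assms by (rule closedin_compact_space)
  then have c: "compact_space (subtopology PP K)" by (rule compact_space_subtopology)
  show ?thesis by (simp add: compact_space_prod_topology c)
qed

lemma W_contains_NN:
  assumes K: "closedin PP K"
    and W: "openin (prod_topology (subtopology PP K) (subtopology PP K)) W" "\<forall>p\<in>K. (p,p) \<in> W"
  shows "\<exists>F A. finite F \<and> finite A \<and> NN K F A \<subseteq> W"
proof -
  let ?T = "prod_topology (subtopology PP K) (subtopology PP K)"
  define Cs where "Cs = K \<times> K - W"
  have tT: "topspace ?T = K \<times> K" by simp
  have "closedin ?T Cs" unfolding Cs_def
    by (metis W(1) closedin_diff closedin_topspace tT)
  then have cC: "compactin ?T Cs" using compact_K[OF K] closedin_compact_space by blast
  define \<U> where "\<U> = {U. openin ?T U \<and> (\<exists>x A. finite A \<and> U \<inter> NN K {x} A = {})}"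
  have cover: "Cs \<subseteq> \<Union>\<U>"
  proof
    fix z assume "z \<in> Cs"
    then obtain p q where z: "z = (p,q)" "p \<in> K" "q \<in> K" "(p,q) \<notin> W" unfolding Cs_def by auto
    then have "p \<noteq> q" using W(2) by blast
    then obtain x where x: "p x \<noteq> q x" by (meson ext)
    define A where "A = Some -` {p x, q x}"
    have fA: "finite A" unfolding A_def by (simp add: finite_vimageI)
    define U where "U = (Nb p {x} A \<inter> K) \<times> (Nb q {x} A \<inter> K)"
    have oU: "openin ?T U" unfolding U_def openin_prod_Times_iff
      using openin_NbK[OF _ fA, of "{x}"] by simp
    have dis: "U \<inter> NN K {x} A = {}"
    proof (rule ccontr)
      assume "U \<inter> NN K {x} A \<noteq> {}"
      then obtain p' q' where pq': "(p',q') \<in> U" "(p',q') \<in> NN K {x} A" by auto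
      have "(p' x, q' x) \<notin> DA A"
      proof (rule DA_sep[OF x])
        show "\<forall>a. p x = Some a \<longrightarrow> a \<in> A" by (simp add: A_def)
        show "\<forall>a. q x = Some a \<longrightarrow> a \<in> A" by (simp add: A_def)
        show "(p x, p' x) \<in> DA A" using pq'(1) by (simp add: U_def Nb_def)
        show "(q x, q' x) \<in> DA A" using pq'(1) by (simp add: U_def Nb_def)
      qed
      moreover have "(p' x, q' x) \<in> DA A" using pq'(2) by (simp add: NN_def)
      ultimately show False by contradiction
    qed
    have "z \<in> U" using z(1-3) by (simp add: U_def)
    moreover have "U \<in> \<U>" unfolding \<U>_def using oU dis fA by blast
    ultimately show "z \<in> \<Union>\<U>" by blast
  qed
  have "\<forall>U\<in>\<U>. openin ?T U" unfolding \<U>_def by blast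
  then obtain \<F> where F: "finite \<F>" "\<F> \<subseteq> \<U>" "Cs \<subseteq> \<Union>\<F>"
    using cC cover unfolding compactin_def by meson
  have "\<forall>U\<in>\<F>. \<exists>xA. finite (snd xA) \<and> U \<inter> NN K {fst xA} (snd xA) = {}"
    using F(2) unfolding \<U>_def by auto
  then obtain xA where xA: "\<forall>U\<in>\<F>. finite (snd (xA U)) \<and> U \<inter> NN K {fst (xA U)} (snd (xA U)) = {}"
    by metis
  define F0 where "F0 = fst ` xA ` \<F>"
  define A0 where "A0 = (\<Union>U\<in>\<F>. snd (xA U))"
  have fF0: "finite F0" unfolding F0_def using F(1) by simp
  have fA0: "finite A0" unfolding A0_def using F(1) xA by simp
  have "NN K F0 A0 \<subseteq> W"
  proof
    fix z assume zN: "z \<in> NN K F0 A0"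
    then obtain p q where z: "z = (p,q)" "p \<in> K" "q \<in> K" unfolding NN_def by blast
    show "z \<in> W"
    proof (rule ccontr)
      assume "z \<notin> W"
      then have "z \<in> Cs" using z unfolding Cs_def by simp
      then obtain U where U: "U \<in> \<F>" "z \<in> U" using F(3) by blast
      have "NN K F0 A0 \<subseteq> NN K {fst (xA U)} (snd (xA U))"
      proof (rule NN_mono)
        show "{fst (xA U)} \<subseteq> F0" unfolding F0_def using U(1) by blast
        show "snd (xA U) \<subseteq> A0" unfolding A0_def using U(1) by blast
      qed
      then have "z \<in> NN K {fst (xA U)} (snd (xA U))" using zN by (rule subsetD)
      then have "z \<in> U \<inter> NN K {fst (xA U)} (snd (xA U))" using U(2) by (rule IntI[rotated])
      then show False using xA U(1) by blast
    qed
  qed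
  then show ?thesis using fF0 fA0 by blast
qed

lemma topoK:
  assumes "closedin PP K"
  shows "topo_unif (subtopology PP K) = VV K"
  unfolding filter_eq_iff
proof (intro allI iffI)
  fix P assume "eventually P (topo_unif (subtopology PP K))"
  then obtain W where W: "openin (prod_topology (subtopology PP K) (subtopology PP K)) W"
     "\<forall>x\<in>K. (x,x) \<in> W" "\<forall>p\<in>W. P p"
    unfolding ev_topo by auto
  obtain F A where FA: "finite F" "finite A" "NN K F A \<subseteq> W"
    using W_contains_NN[OF assms W(1,2)] by blast
  have "\<forall>p\<in>NN K F A. P p" using FA(3) W(3) by blast
  then show "eventually P (VV K)" unfolding ev_VV using FA(1,2) by blast
next
  fix P assume "eventually P (VV K)"
  then obtain F A where FA: "finite F" "finite A" "\<forall>p\<in>NN K F A. P p" unfolding ev_VV by blast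
  have "openin (prod_topology (subtopology PP K) (subtopology PP K)) (NN K F A)"
    using FA(1,2) by (rule openin_NN)
  moreover have "\<forall>x\<in>topspace (subtopology PP K). (x,x) \<in> NN K F A" by (simp add: NN_diag)
  ultimately show "eventually P (topo_unif (subtopology PP K))" unfolding ev_topo using FA(3) by blast
qed

lemma NN_sym: "(p,q) \<in> NN K F A \<Longrightarrow> (q,p) \<in> NN K F A"
  unfolding NN_def using DA_sym by blast

lemma NN_trans: "(p,q) \<in> NN K F A \<Longrightarrow> (q,r) \<in> NN K F A \<Longrightarrow> (p,r) \<in> NN K F A"
  unfolding NN_def using DA_trans by blast

lemma unif_VV: "is_uniformity K (VV K)"
  unfolding is_uniformity_def
proof (intro conjI allI impI ballI)
  have "NN K {} {} \<subseteq> K \<times> K" unfolding NN_def by blast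
  then show "eventually (\<lambda>p. p \<in> K \<times> K) (VV K)" unfolding ev_VV_sub by blast
next
  fix E x assume "eventually (\<lambda>p. p \<in> E) (VV K)" "x \<in> K"
  then obtain F A where FA: "finite F" "finite A" "NN K F A \<subseteq> E" unfolding ev_VV_sub by blast
  show "(x,x) \<in> E" using FA(3) NN_diag[OF \<open>x \<in> K\<close>] by (rule subsetD)
next
  fix E assume "eventually (\<lambda>p. p \<in> E) (VV K)"
  then obtain F A where FA: "finite F" "finite A" "NN K F A \<subseteq> E" unfolding ev_VV_sub by blast
  have "\<forall>p\<in>NN K F A. (case p of (x, y) \<Rightarrow> (y, x) \<in> E)"
  proof
    fix p assume "p \<in> NN K F A"
    then obtain a b where ab: "p = (a,b)" "(a,b) \<in> NN K F A" by (cases p) auto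
    then have "(b,a) \<in> NN K F A" by (simp add: NN_sym)
    then have "(b,a) \<in> E" using FA(3) by (rule subsetD[rotated])
    then show "case p of (x, y) \<Rightarrow> (y, x) \<in> E" using ab(1) by simp
  qed
  then show "eventually (\<lambda>(x, y). (y, x) \<in> E) (VV K)" unfolding ev_VV using FA(1,2) by blast
  have "NN K F A O NN K F A \<subseteq> E"
  proof clarify
    fix a b c assume "(a,b) \<in> NN K F A" "(b,c) \<in> NN K F A"
    then have "(a,c) \<in> NN K F A" by (rule NN_trans)
    then show "(a,c) \<in> E" using FA(3) by (rule subsetD[rotated])
  qed
  moreover have "eventually (\<lambda>p. p \<in> NN K F A) (VV K)" unfolding ev_VV_sub using FA(1,2) by blast
  ultimately show "\<exists>D. eventually (\<lambda>p. p \<in> D) (VV K) \<and> D O D \<subseteq> E" by blast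
qed

lemma sep_VV: "unif_separated K (VV K)"
  unfolding unif_separated_def
proof (intro ballI impI)
  fix p q assume pq: "p \<in> K" "q \<in> K" and H: "\<forall>E. eventually (\<lambda>p. p \<in> E) (VV K) \<longrightarrow> (p, q) \<in> E"
  show "p = q"
  proof
    fix x
    define A where "A = Some -` {p x, q x}"
    have "finite A" unfolding A_def by (simp add: finite_vimageI)
    then have "eventually (\<lambda>z. z \<in> NN K {x} A) (VV K)" unfolding ev_VV_sub by blast
    then have "(p,q) \<in> NN K {x} A" using H by blast
    then have "(p x, q x) \<in> DA A" by (simp add: NN_def)
    then show "p x = q x" by (cases "p x"; cases "q x") (auto simp: DA_def UA_def A_def)
  qed
qed

lemma complete_VV:
  assumes K: "closedin PP K"
  shows "unif_complete K (VV K)"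
  unfolding unif_complete_def
proof (intro allI impI)
  fix FF assume C: "unif_cauchy K (VV K) FF"
  then have Fnb: "FF \<noteq> bot" and FK: "eventually (\<lambda>p. p \<in> K) FF"
    and Cy: "\<And>E. eventually (\<lambda>p. p \<in> E) (VV K) \<Longrightarrow> eventually (\<lambda>p. p \<in> E) (FF \<times>\<^sub>F FF)"
    by (auto simp: unif_cauchy_def le_principal)
  define c where "c x = (if \<exists>a. eventually (\<lambda>p. p x = Some a) FF
     then Some (SOME a. eventually (\<lambda>p. p x = Some a) FF) else None)" for x
  have conv: "eventually (\<lambda>p. (c x, p x) \<in> DA A) FF" if "finite A" for x A
  proof (cases "\<exists>a. eventually (\<lambda>p. p x = Some a) FF")
    case True
    define a where "a = (SOME a. eventually (\<lambda>p. p x = Some a) FF)"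
    have ev: "eventually (\<lambda>p. p x = Some a) FF" unfolding a_def using True by (rule someI_ex)
    have cx: "c x = Some a" using True by (simp add: c_def a_def)
    show ?thesis using ev by (rule eventually_mono) (simp add: cx)
  next
    case False
    then have cx: "c x = None" by (simp add: c_def)
    have "eventually (\<lambda>z. z \<in> NN K {x} A) (VV K)" unfolding ev_VV_sub using that by blast
    then have "eventually (\<lambda>z. z \<in> NN K {x} A) (FF \<times>\<^sub>F FF)" by (rule Cy)
    then obtain Q where Q: "eventually Q FF" "\<And>p q. Q p \<Longrightarrow> Q q \<Longrightarrow> (p, q) \<in> NN K {x} A"
      unfolding eventually_prod_same by blast
    have QU: "p x \<in> UA A" if "Q p" for p
    proof (rule ccontr)
      assume "p x \<notin> UA A"
      then obtain a where a: "p x = Some a" "a \<in> A" by (auto simp: UA_def)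
      have "eventually (\<lambda>q. q x = Some a) FF"
        using Q(1)
      proof (rule eventually_mono)
        fix q assume "Q q"
        then have "(p, q) \<in> NN K {x} A" using Q(2) \<open>Q p\<close> by blast
        then have "(p x, q x) \<in> DA A" by (simp add: NN_def)
        then show "q x = Some a" using a by (auto simp: DA_def UA_def)
      qed
      then show False using False by blast
    qed
    show ?thesis using Q(1) by (rule eventually_mono) (simp add: cx DA_None QU)
  qed
  have convF: "eventually (\<lambda>p. p \<in> K \<and> (\<forall>x\<in>F. (c x, p x) \<in> DA A)) FF"
    if "finite F" "finite A" for F A
  proof -
    have "eventually (\<lambda>p. \<forall>x\<in>F. (c x, p x) \<in> DA A) FF"
      using that(1) by (rule eventually_ball_finite) (simp add: conv[OF that(2)])
    then show ?thesis using FK by (simp add: eventually_conj_iff)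
  qed
  have cK: "c \<in> K"
  proof -
    have "c \<in> PP closure_of K"
      unfolding in_closure_PP
    proof (intro allI impI)
      fix F :: "'a option set" and A :: "'a set" assume "finite F" "finite A"
      then obtain p where "p \<in> K" "\<forall>x\<in>F. (c x, p x) \<in> DA A"
        using eventually_happens'[OF Fnb convF] by blast
      then show "\<exists>y\<in>K. y \<in> Nb c F A" by (auto simp: Nb_def)
    qed
    then show ?thesis using closure_of_closedin[OF K] by simp
  qed
  have "unif_converges (VV K) FF c"
    unfolding unif_converges_def
  proof (intro allI impI)
    fix E assume "eventually (\<lambda>p. p \<in> E) (VV K)"
    then obtain F A where FA: "finite F" "finite A" "NN K F A \<subseteq> E" unfolding ev_VV_sub by blast
    show "eventually (\<lambda>y. (c, y) \<in> E) FF"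
      using convF[OF FA(1,2)]
    proof (rule eventually_mono)
      fix p assume "p \<in> K \<and> (\<forall>x\<in>F. (c x, p x) \<in> DA A)"
      then have "(c, p) \<in> NN K F A" using cK unfolding NN_def by blast
      then show "(c, p) \<in> E" using FA(3) by (rule subsetD[rotated])
    qed
  qed
  then show "\<exists>x\<in>K. unif_converges (VV K) FF x" using cK by blast
qed

lemma induces_VV: "unif_induces (VV K) (subtopology PP K)"
  unfolding unif_induces_def
proof (intro allI iffI conjI ballI)
  fix V x assume V: "openin (subtopology PP K) V" "x \<in> V"
  then obtain O' where O': "openin PP O'" "V = O' \<inter> K" unfolding openin_subtopology by blast
  then have "x \<in> O'" using V(2) by blast
  from Nb_sub[OF O'(1) this] obtain F A where FA: "finite F" "finite A" "Nb x F A \<subseteq> O'" by blast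
  have "eventually (\<lambda>z. z \<in> NN K F A) (VV K)" unfolding ev_VV_sub using FA(1,2) by blast
  moreover have "{y. (x, y) \<in> NN K F A} \<subseteq> V"
  proof
    fix y assume "y \<in> {y. (x, y) \<in> NN K F A}"
    then have "y \<in> K" "y \<in> Nb x F A" unfolding NN_def Nb_def by auto
    then show "y \<in> V" using FA(3) O'(2) by blast
  qed
  ultimately show "\<exists>E. eventually (\<lambda>p. p \<in> E) (VV K) \<and> {y. (x, y) \<in> E} \<subseteq> V" by blast
next
  fix V assume "openin (subtopology PP K) V"
  then show "V \<subseteq> topspace (subtopology PP K)" by (rule openin_subset)
next
  fix V assume H: "V \<subseteq> topspace (subtopology PP K) \<and>
         (\<forall>x\<in>V. \<exists>E. eventually (\<lambda>p. p \<in> E) (VV K) \<and> {y. (x, y) \<in> E} \<subseteq> V)"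
  then have VK: "V \<subseteq> K" by simp
  have "\<forall>x\<in>V. \<exists>FA. finite (fst FA) \<and> finite (snd FA) \<and> {y. (x, y) \<in> NN K (fst FA) (snd FA)} \<subseteq> V"
  proof
    fix x assume "x \<in> V"
    then obtain E where E: "eventually (\<lambda>p. p \<in> E) (VV K)" "{y. (x, y) \<in> E} \<subseteq> V" using H by blast
    then obtain F A where FA: "finite F" "finite A" "NN K F A \<subseteq> E" unfolding ev_VV_sub by blast
    have "{y. (x, y) \<in> NN K F A} \<subseteq> V" using FA(3) E(2) by blast
    then show "\<exists>FA. finite (fst FA) \<and> finite (snd FA) \<and> {y. (x, y) \<in> NN K (fst FA) (snd FA)} \<subseteq> V"
      using FA(1,2) by (intro exI[of _ "(F,A)"]) simp
  qed
  then obtain fa where fa: "\<forall>x\<in>V. finite (fst (fa x)) \<and> finite (snd (fa x)) \<and> {y. (x, y) \<in> NN K (fst (fa x)) (snd (fa x))} \<subseteq> V"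
    by metis
  define O' where "O' = (\<Union>x\<in>V. Nb x (fst (fa x)) (snd (fa x)))"
  have "openin PP O'" unfolding O'_def
  proof (rule openin_Union)
    fix S assume "S \<in> (\<lambda>x. Nb x (fst (fa x)) (snd (fa x))) ` V"
    then obtain x where "x \<in> V" "S = Nb x (fst (fa x)) (snd (fa x))" by blast
    then show "openin PP S" using fa openin_Nb by blast
  qed
  moreover have "V = O' \<inter> K"
  proof
    show "V \<subseteq> O' \<inter> K"
    proof
      fix x assume "x \<in> V"
      then have "x \<in> Nb x (fst (fa x)) (snd (fa x))" by simp
      then show "x \<in> O' \<inter> K" using \<open>x \<in> V\<close> VK unfolding O'_def by blast
    qed
    show "O' \<inter> K \<subseteq> V"
    proof
      fix y assume "y \<in> O' \<inter> K"
      then obtain x where x: "x \<in> V" "y \<in> Nb x (fst (fa x)) (snd (fa x))" "y \<in> K" unfolding O'_def by blast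
      then have "(x, y) \<in> NN K (fst (fa x)) (snd (fa x))" using VK unfolding NN_def Nb_def by blast
      then show "y \<in> V" using fa x(1) by blast
    qed
  qed
  ultimately show "openin (subtopology PP K) V" unfolding openin_subtopology by blast
qed

lemma jmap_inj: "inj_on jmap G"
proof (rule inj_onI)
  fix f g assume "jmap f = jmap g"
  then have "jmap f (Some x) = jmap g (Some x)" for x by simp
  then show "f = g" by (auto simp: jmap_def)
qed

lemma jmap_None[simp]: "jmap g None = None" by (simp add: jmap_def)
lemma jmap_Some[simp]: "jmap g (Some x) = Some (g x)" by (simp add: jmap_def)

lemma comap_K:
  assumes "jmap ` G \<subseteq> K"
  shows "RRf G = inf (filtercomap (map_prod jmap jmap) (VV K)) (principal (G \<times> G))"
  unfolding filter_eq_iff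
proof (intro allI)
  fix P
  have R: "eventually P (inf (filtercomap (map_prod jmap jmap) (VV K)) (principal (G \<times> G)))
     \<longleftrightarrow> (\<exists>Q. eventually Q (VV K) \<and> (\<forall>x. Q (map_prod jmap jmap x) \<longrightarrow> x \<in> G \<times> G \<longrightarrow> P x))"
    by (simp add: eventually_inf_principal eventually_filtercomap)
  show "eventually P (RRf G) \<longleftrightarrow> eventually P (inf (filtercomap (map_prod jmap jmap) (VV K)) (principal (G \<times> G)))"
    unfolding R
  proof
    assume "eventually P (RRf G)"
    then obtain C where C: "finite C" "\<forall>p\<in>RC G C. P p" unfolding ev_RR by blast
    have "eventually (\<lambda>z. z \<in> NN K (Some ` C) C) (VV K)" unfolding ev_VV_sub using C(1) by blast
    moreover have "\<forall>x. map_prod jmap jmap x \<in> NN K (Some ` C) C \<longrightarrow> x \<in> G \<times> G \<longrightarrow> P x"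
    proof (intro allI impI)
      fix x assume x: "map_prod jmap jmap x \<in> NN K (Some ` C) C" "x \<in> G \<times> G"
      obtain g h where gh: "x = (g,h)" by (cases x)
      have "\<forall>y\<in>Some ` C. (jmap g y, jmap h y) \<in> DA C" using x(1) gh by (simp add: NN_def)
      then have D: "\<forall>c\<in>C. g c = h c \<or> (g c \<notin> C \<and> h c \<notin> C)" by (simp add: DA_Some)
      have "\<forall>c\<in>C. (g c \<in> C \<or> h c \<in> C) \<longrightarrow> g c = h c"
      proof (intro ballI impI)
        fix c assume "c \<in> C" "g c \<in> C \<or> h c \<in> C"
        then show "g c = h c" using D by blast
      qed
      then have "(g,h) \<in> RC G C" using x(2) gh unfolding RC_def by blast
      then show "P x" using C(2) gh by blast
    qed
    ultimately show "\<exists>Q. eventually Q (VV K) \<and> (\<forall>x. Q (map_prod jmap jmap x) \<longrightarrow> x \<in> G \<times> G \<longrightarrow> P x)"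
      by blast
  next
    assume "\<exists>Q. eventually Q (VV K) \<and> (\<forall>x. Q (map_prod jmap jmap x) \<longrightarrow> x \<in> G \<times> G \<longrightarrow> P x)"
    then obtain Q where Q: "eventually Q (VV K)" "\<forall>x. Q (map_prod jmap jmap x) \<longrightarrow> x \<in> G \<times> G \<longrightarrow> P x"
      by blast
    from Q(1) obtain F A where FA: "finite F" "finite A" "\<forall>p\<in>NN K F A. Q p" unfolding ev_VV by blast
    define C where "C = A \<union> Some -` F"
    have fC: "finite C" unfolding C_def using FA(1,2) by (simp add: finite_vimageI)
    have "\<forall>p\<in>RC G C. P p"
    proof
      fix p assume p: "p \<in> RC G C"
      obtain g h where gh: "p = (g,h)" by (cases p)
      have H: "g \<in> G" "h \<in> G" "\<forall>x\<in>C. (g x \<in> C \<or> h x \<in> C) \<longrightarrow> g x = h x"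
        using p gh unfolding RC_def by blast+
      have "(jmap g u, jmap h u) \<in> DA A" if "u \<in> F" for u
      proof (cases u)
        case None then show ?thesis by simp
      next
        case (Some x)
        then have xC: "x \<in> C" using that unfolding C_def by simp
        show ?thesis
        proof (cases "g x \<in> C \<or> h x \<in> C")
          case True
          then have "g x = h x" using H(3) xC by blast
          then show ?thesis using Some by simp
        next
          case False
          then have "g x \<notin> A" "h x \<notin> A" unfolding C_def by blast+
          then show ?thesis using Some by (simp add: DA_Some)
        qed
      qed
      moreover have "jmap g \<in> K" "jmap h \<in> K" using assms H(1,2) by blast+
      ultimately have "(jmap g, jmap h) \<in> NN K F A" unfolding NN_def by blast
      then have "Q (map_prod jmap jmap p)" using FA(3) gh by simp
      then show "P p" using Q(2) H(1,2) gh by blast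
    qed
    then show "eventually P (RRf G)" unfolding ev_RR using fC by blast
  qed
qed

lemma dense_K:
  assumes "K = PP closure_of (jmap ` G)"
  shows "unif_dense K (VV K) (jmap ` G)"
  unfolding unif_dense_def
proof (intro conjI ballI allI impI)
  show "jmap ` G \<subseteq> K" unfolding assms by (rule closure_of_subset) simp
  fix c E assume c: "c \<in> K" and "eventually (\<lambda>p. p \<in> E) (VV K)"
  then obtain F A where FA: "finite F" "finite A" "NN K F A \<subseteq> E" unfolding ev_VV_sub by blast
  have "c \<in> PP closure_of (jmap ` G)" using c assms by simp
  then obtain y where y: "y \<in> jmap ` G" "y \<in> Nb c F A" unfolding in_closure_PP using FA(1,2) by blast
  have "y \<in> K" using y(1) \<open>jmap ` G \<subseteq> K\<close> by blast
  then have "(c,y) \<in> NN K F A" using c y(2) unfolding NN_def Nb_def by blast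
  then have "(c,y) \<in> E" using FA(3) by (rule subsetD[rotated])
  then show "\<exists>d\<in>jmap ` G. (c, d) \<in> E" using y(1) by blast
qed

lemma main_G:
  assumes "is_perm_group G" "ultratransitive G" "K = PP closure_of (jmap ` G)"
  shows "is_completion G (roelcke_unif G) K (topo_unif (subtopology PP K)) jmap
          \<and> unif_induces (topo_unif (subtopology PP K)) (subtopology PP K)"
proof -
  have Kc: "closedin PP K" using assms(3) by simp
  have sub: "jmap ` G \<subseteq> K" unfolding assms(3) by (rule closure_of_subset) simp
  have T: "topo_unif (subtopology PP K) = VV K" by (rule topoK[OF Kc])
  have R: "roelcke_unif G = RRf G" by (rule roelcke_eq[OF assms(1,2)])
  show ?thesis unfolding T R is_completion_def
    by (intro conjI unif_RR unif_VV sep_VV complete_VV[OF Kc] sub jmap_inj comap_K[OF sub]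
      dense_K[OF assms(3)] induces_VV)
qed

lemma closure_perms:
  fixes G :: "('a \<Rightarrow> 'a) set"
  assumes "is_perm_group G" "ultratransitive G"
  shows "PP closure_of (jmap ` G) = PP closure_of (jmap ` perms)"
proof
  have "G \<subseteq> perms" using assms(1) by (simp add: is_perm_group_def)
  then show "PP closure_of (jmap ` G) \<subseteq> PP closure_of (jmap ` perms)"
    by (intro closure_of_mono image_mono)
next
  have "jmap ` perms \<subseteq> PP closure_of (jmap ` G)"
  proof
    fix z :: "'a option \<Rightarrow> 'a option" assume "z \<in> jmap ` perms"
    then obtain f where f: "bij f" "z = jmap f" by (auto simp: perms_def)
    show "z \<in> PP closure_of (jmap ` G)"
      unfolding in_closure_PP
    proof (intro allI impI)
      fix F :: "'a option set" and A :: "'a set" assume "finite F" "finite A"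
      then have fP: "finite (Some -` F)" by (simp add: finite_vimageI)
      have "inj_on f (Some -` F)" using f(1) bij_is_inj inj_on_subset by blast
      then obtain g where g: "g \<in> G" "\<forall>x\<in>Some -` F. g x = f x" using ut_extend[OF assms(2) fP] by blast
      have "jmap g \<in> Nb z F A"
        unfolding Nb_def
      proof (intro CollectI ballI)
        fix u assume "u \<in> F"
        show "(z u, jmap g u) \<in> DA A"
        proof (cases u)
          case None then show ?thesis using f(2) by simp
        next
          case (Some x)
          then have "g x = f x" using g(2) \<open>u \<in> F\<close> by simp
          then show ?thesis using f(2) Some by simp
        qed
      qed
      then show "\<exists>y\<in>jmap ` G. y \<in> Nb z F A" using g(1) by blast
    qed
  qed
  then show "PP closure_of (jmap ` perms) \<subseteq> PP closure_of (jmap ` G)"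
    by (rule closure_of_minimal) simp
qed

theorem corollary4p2:
  fixes G :: "('a \<Rightarrow> 'a) set"
  assumes "infinite (UNIV :: 'a set)"
    and "is_perm_group G"
    and "ultratransitive G"
  shows "totally_bounded_unif UNIV (UX G)
    \<and> (is_completion UNIV (UX G) UNIV (topo_unif alphaX) Some
        \<and> unif_induces (topo_unif alphaX) alphaX)
    \<and> roelcke_unif G = UU G
    \<and> totally_bounded_unif G (roelcke_unif G)
    \<and> (let P = product_topology (\<lambda>_. alphaX) UNIV;
           K = P closure_of (jmap ` G)
       in is_completion G (roelcke_unif G) K (topo_unif (subtopology P K)) jmap
          \<and> unif_induces (topo_unif (subtopology P K)) (subtopology P K)
          \<and> K = P closure_of (jmap ` perms)
          \<and> is_completion perms (roelcke_unif perms) K (topo_unif (subtopology P K)) jmap)"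
proof -
  have p1: "totally_bounded_unif UNIV (UX G)" by (rule part1[OF assms])
  have p2: "is_completion UNIV (UX G) UNIV (topo_unif alphaX) Some
        \<and> unif_induces (topo_unif alphaX) (alphaX :: 'a option topology)" by (rule part2[OF assms])
  have p3: "roelcke_unif G = UU G"
    using roelcke_eq[OF assms(2,3)] UU_eq[OF assms(2,3)] by simp
  have p4: "totally_bounded_unif G (roelcke_unif G)" by (rule part4[OF assms(2,3)])
  define K where "K = PP closure_of (jmap ` G)"
  have a: "is_completion G (roelcke_unif G) K (topo_unif (subtopology PP K)) jmap
          \<and> unif_induces (topo_unif (subtopology PP K)) (subtopology PP K)"
    by (rule main_G[OF assms(2,3) K_def])
  have eq: "K = PP closure_of (jmap ` perms)" using closure_perms[OF assms(2,3)] K_def by simp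
  have b: "is_completion perms (roelcke_unif perms) K (topo_unif (subtopology PP K)) jmap"
    using main_G[OF perms_group perms_ut eq] by blast
  have p5: "is_completion G (roelcke_unif G) K (topo_unif (subtopology PP K)) jmap
          \<and> unif_induces (topo_unif (subtopology PP K)) (subtopology PP K)
          \<and> K = PP closure_of (jmap ` perms)
          \<and> is_completion perms (roelcke_unif perms) K (topo_unif (subtopology PP K)) jmap"
    using a b eq by blast
  have p2': "is_completion UNIV (UX G) UNIV (topo_unif alphaX) Some" using p2 by blast
  show ?thesis unfolding Let_def K_def[symmetric]
    by (intro conjI p1 p2' p3 p4 p5 induces_alpha)
qed

end
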